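(* Let $R=\mathsf{k}\{x,y\}$, $\mathfrak{D}=\mathsf{k}_{DP}[X,Y]$, $S=\mathsf{k}\{x,y,z,w\}$, $\mathfrak{E}=\mathsf{k}_{DP}[X,Y,Z,W]$. Let $G=g+g_{13}$ with $g\in\mathfrak{D}_{14}$ homogeneous of degree $14$ and $g_{13}\in\mathfrak{E}$ homogeneous of degree $13$, let $B=S/\operatorname{Ann}_S G$, and assume $$H_B(0)=(1,2,3,4,5,6,7,8,7,6,5,4,3,2,1),\qquad H_B(1)=(0,2,4,6,4,2,0,0,2,4,6,4,2,0).$$ Then $H_B(2)_6\ge 4$.
   Context: $\mathsf{k}$ is a field; $S$ acts on $\mathfrak{E}$ by contraction ($x^{\alpha}\circ X^{[\beta]}=X^{[\beta-\alpha]}$ if $\beta\ge\alpha$ componentwise, $0$ otherwise). For $G$ of degree $j$, $B=S/\operatorname{Ann}_S G$ is Artinian Gorenstein of socle degree $j$ with maximal ideal $\mathfrak{m}_B$; $C_B(u)$ is the ideal of $B^*=\bigoplus_i\mathfrak{m}_B^i/\mathfrak{m}_B^{i+1}$ whose degree-$i$ part is the image of $\mathfrak{m}_B^i\cap(0:\mathfrak{m}_B^{\,j+1-u-i})$, and $H_B(u)_i=\dim_{\mathsf{k}}\big(C_B(u)/C_B(u+1)\big)_i$. *)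

theory Defs
  imports Main
begin

text \<open>Monomials / exponent vectors in four variables x,y,z,w (resp. X,Y,Z,W).
  The first two coordinates are x,y (resp. X,Y).\<close>
type_synonym mon = "nat \<times> nat \<times> nat \<times> nat"

definition madd :: "mon \<Rightarrow> mon \<Rightarrow> mon" where
  "madd a b = (case a of (a1,a2,a3,a4) \<Rightarrow> case b of (b1,b2,b3,b4) \<Rightarrow>
     (a1+b1, a2+b2, a3+b3, a4+b4))"

definition msub :: "mon \<Rightarrow> mon \<Rightarrow> mon" where
  "msub a b = (case a of (a1,a2,a3,a4) \<Rightarrow> case b of (b1,b2,b3,b4) \<Rightarrow>
     (a1-b1, a2-b2, a3-b3, a4-b4))"

definition mle :: "mon \<Rightarrow> mon \<Rightarrow> bool" where
  "mle a b = (case a of (a1,a2,a3,a4) \<Rightarrow> case b of (b1,b2,b3,b4) \<Rightarrow>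
     a1 \<le> b1 \<and> a2 \<le> b2 \<and> a3 \<le> b3 \<and> a4 \<le> b4)"

definition mdeg :: "mon \<Rightarrow> nat" where
  "mdeg a = (case a of (a1,a2,a3,a4) \<Rightarrow> a1+a2+a3+a4)"

text \<open>Elements of S = k{x,y,z,w} are formal power series, i.e. coefficient functions
  mon => k.  Elements of the divided power ring E = k_DP[X,Y,Z,W] are coefficient
  functions (w.r.t. the basis X^[beta]) with finite support.\<close>

definition dp_poly :: "(mon \<Rightarrow> 'k::field) \<Rightarrow> bool" where
  "dp_poly G \<longleftrightarrow> finite {b. G b \<noteq> 0}"

definition dp_homog :: "nat \<Rightarrow> (mon \<Rightarrow> 'k::field) \<Rightarrow> bool" where
  "dp_homog d G \<longleftrightarrow> dp_poly G \<and> (\<forall>b. G b \<noteq> 0 \<longrightarrow> mdeg b = d)"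

definition in_D :: "(mon \<Rightarrow> 'k::field) \<Rightarrow> bool" where
  "in_D G \<longleftrightarrow> dp_poly G \<and> (\<forall>a b c d. G (a,b,c,d) \<noteq> 0 \<longrightarrow> c = 0 \<and> d = 0)"

definition dp_deg :: "(mon \<Rightarrow> 'k::field) \<Rightarrow> nat" where
  "dp_deg G = Max (mdeg ` {b. G b \<noteq> 0})"

text \<open>Contraction: x^alpha o X^[beta] = X^[beta - alpha] if alpha <= beta, else 0,
  extended bilinearly: the coefficient of X^[gamma] in f o G is
  sum over beta >= gamma of f_(beta-gamma) * G_beta.\<close>
definition contract :: "(mon \<Rightarrow> 'k::field) \<Rightarrow> (mon \<Rightarrow> 'k) \<Rightarrow> (mon \<Rightarrow> 'k)" where
  "contract f G = (\<lambda>c. \<Sum>b\<in>{b. G b \<noteq> 0 \<and> mle c b}. f (msub b c) * G b)"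

definition smult_ser :: "(mon \<Rightarrow> 'k::field) \<Rightarrow> (mon \<Rightarrow> 'k) \<Rightarrow> (mon \<Rightarrow> 'k)" where
  "smult_ser f g = (\<lambda>c. \<Sum>a\<in>{a. mle a c}. f a * g (msub c a))"

definition ssum :: "(mon \<Rightarrow> 'k::field) set \<Rightarrow> (mon \<Rightarrow> 'k) set \<Rightarrow> (mon \<Rightarrow> 'k) set" where
  "ssum A B = {(\<lambda>c. a c + b c) | a b. a \<in> A \<and> b \<in> B}"

definition ann :: "(mon \<Rightarrow> 'k::field) \<Rightarrow> (mon \<Rightarrow> 'k) set" where
  "ann G = {f. contract f G = (\<lambda>_. 0)}"

text \<open>The i-th power of the maximal ideal m = (x,y,z,w) of the power series ring S:
  series of order at least i.\<close>
definition mpow :: "nat \<Rightarrow> (mon \<Rightarrow> 'k::field) set" where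
  "mpow i = {f. \<forall>a. mdeg a < i \<longrightarrow> f a = 0}"

text \<open>Preimage in S of m_B^i, where B = S / Ann_S G.\<close>
definition mB_pow_pre :: "(mon \<Rightarrow> 'k::field) \<Rightarrow> nat \<Rightarrow> (mon \<Rightarrow> 'k) set" where
  "mB_pow_pre G i = ssum (mpow i) (ann G)"

text \<open>Preimage in S of (0 : m_B^k).\<close>
definition colon_pre :: "(mon \<Rightarrow> 'k::field) \<Rightarrow> nat \<Rightarrow> (mon \<Rightarrow> 'k) set" where
  "colon_pre G k = {f. \<forall>h\<in>mpow k. smult_ser f h \<in> ann G}"

text \<open>Preimage in S of C_B(u)_i + m_B^(i+1), i.e. of the degree-i part of C_B(u)
  viewed inside m_B^i/m_B^(i+1), with j the socle degree (= degree of G).\<close>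
definition C_pre :: "(mon \<Rightarrow> 'k::field) \<Rightarrow> nat \<Rightarrow> nat \<Rightarrow> (mon \<Rightarrow> 'k) set" where
  "C_pre G u i = ssum (ssum (mB_pow_pre G i \<inter> colon_pre G (dp_deg G + 1 - u - i))
                            (mpow (i+1))) (ann G)"

text \<open>Dimension over k of the quotient V/W of subspaces W \<subseteq> V of S: the maximal
  number of elements of V that are linearly independent modulo W.\<close>
definition qdim :: "(mon \<Rightarrow> 'k::field) set \<Rightarrow> (mon \<Rightarrow> 'k) set \<Rightarrow> nat" where
  "qdim V W = Sup {card X | X. finite X \<and> X \<subseteq> V \<and>
      (\<forall>c. (\<lambda>m. \<Sum>x\<in>X. c x * x m) \<in> W \<longrightarrow> (\<forall>x\<in>X. c x = 0))}"

text \<open>H_B(u)_i = dim_k (C_B(u)/C_B(u+1))_i.\<close>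
definition HB :: "(mon \<Rightarrow> 'k::field) \<Rightarrow> nat \<Rightarrow> nat \<Rightarrow> nat" where
  "HB G u i = qdim (C_pre G u i) (C_pre G (Suc u) i)"

end

theory Submission
  imports Defs "HOL-Library.Function_Algebras" "HOL.Vector_Spaces"
begin


declare split_paired_All[simp del] split_paired_Ex[simp del]

lemma madd_simp[simp]: "madd (a1,a2,a3,a4) (b1,b2,b3,b4) = (a1+b1,a2+b2,a3+b3,a4+b4)"
  by (simp add: madd_def)
lemma msub_simp[simp]: "msub (a1,a2,a3,a4) (b1,b2,b3,b4) = (a1-b1,a2-b2,a3-b3,a4-b4)"
  by (simp add: msub_def)
lemma mle_simp[simp]: "mle (a1,a2,a3,a4) (b1,b2,b3,b4) = (a1\<le>b1 \<and> a2\<le>b2 \<and> a3\<le>b3 \<and> a4\<le>b4)"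
  by (simp add: mle_def)
lemma mdeg_simp[simp]: "mdeg (a1,a2,a3,a4) = a1+a2+a3+a4"
  by (simp add: mdeg_def)

lemma mle_finite: "finite {a. mle a c}"
proof -
  obtain c1 c2 c3 c4 where c: "c = (c1,c2,c3,c4)" by (cases c) auto
  have "{a. mle a c} \<subseteq> {..c1} \<times> {..c2} \<times> {..c3} \<times> {..c4}"
    by (auto simp: c)
  then show ?thesis by (rule finite_subset) auto
qed

lemma mle_add_sub: "mle a b \<Longrightarrow> madd a (msub b a) = b"
  by (cases a, cases b) auto
lemma mle_sub_add: "mle a b \<Longrightarrow> madd (msub b a) a = b"
  by (cases a, cases b) auto
lemma msub_madd[simp]: "msub (madd a b) a = b"
  by (cases a, cases b) auto
lemma msub_madd2[simp]: "msub (madd b a) a = b"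
  by (cases a, cases b) auto
lemma mle_madd[simp]: "mle a (madd a b)"
  by (cases a, cases b) auto
lemma mle_madd2[simp]: "mle a (madd b a)"
  by (cases a, cases b) auto
lemma mdeg_madd[simp]: "mdeg (madd a b) = mdeg a + mdeg b"
  by (cases a, cases b) auto
lemma mdeg_msub: "mle a b \<Longrightarrow> mdeg (msub b a) = mdeg b - mdeg a"
  by (cases a, cases b) auto
lemma mle_mdeg: "mle a b \<Longrightarrow> mdeg a \<le> mdeg b"
  by (cases a, cases b) auto
lemma mle_refl[simp]: "mle a a"
  by (cases a) auto
lemma msub_self[simp]: "msub a a = (0,0,0,0)"
  by (cases a) auto
lemma msub_zero[simp]: "msub a (0,0,0,0) = a"
  by (cases a) auto
lemma mle_zero[simp]: "mle (0,0,0,0) a"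
  by (cases a) auto
lemma mle_trans: "mle a b \<Longrightarrow> mle b c \<Longrightarrow> mle a c"
  by (cases a, cases b, cases c) auto
lemma mle_antisym: "mle a b \<Longrightarrow> mle b a \<Longrightarrow> a = b"
  by (cases a, cases b) auto
lemma mdeg_eq_le: "mle a b \<Longrightarrow> mdeg a = mdeg b \<Longrightarrow> a = b"
  by (cases a, cases b) auto
lemma madd_comm: "madd a b = madd b a"
  by (cases a, cases b) auto
lemma madd_assoc: "madd (madd a b) c = madd a (madd b c)"
  by (cases a, cases b, cases c) auto
lemma madd_zero[simp]: "madd a (0,0,0,0) = a" "madd (0,0,0,0) a = a"
  by (cases a, auto)+
lemma mdeg_zero_iff: "mdeg a = 0 \<longleftrightarrow> a = (0,0,0,0)"
  by (cases a) auto

definition supp :: "(mon \<Rightarrow> 'k::zero) \<Rightarrow> mon set" where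
  "supp G = {b. G b \<noteq> 0}"

lemma contract_alt:
  assumes "finite A" "{b. G b \<noteq> 0} \<subseteq> A"
  shows "contract f G c = (\<Sum>b\<in>A. if mle c b then f (msub b c) * G b else 0)"
proof -
  have "contract f G c = (\<Sum>b\<in>{b\<in>A. G b \<noteq> 0 \<and> mle c b}. f (msub b c) * G b)"
    unfolding contract_def using assms by (intro sum.cong) auto
  also have "\<dots> = (\<Sum>b\<in>A. if G b \<noteq> 0 \<and> mle c b then f (msub b c) * G b else 0)"
    using assms(1) by (simp add: sum.inter_filter)
  also have "\<dots> = (\<Sum>b\<in>A. if mle c b then f (msub b c) * G b else 0)"
    by (intro sum.cong) auto
  finally show ?thesis .
qed



lemma msub_msub: "mle a c \<Longrightarrow> msub c (msub c a) = a"
  by (cases a rule: prod_cases4, cases c rule: prod_cases4) auto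
lemma mle_msub: "mle (msub c a) c"
  by (cases a rule: prod_cases4, cases c rule: prod_cases4) auto
lemma mle_msub_iff: "mle c b \<Longrightarrow> mle a (msub b c) \<longleftrightarrow> mle a b \<and> mle c (msub b a)"
  by (cases a rule: prod_cases4, cases b rule: prod_cases4, cases c rule: prod_cases4) auto
lemma msub_comm3: "msub (msub b c) a = msub (msub b a) c"
  by (cases a rule: prod_cases4, cases b rule: prod_cases4, cases c rule: prod_cases4) auto

definition delta :: "mon \<Rightarrow> mon \<Rightarrow> 'k::field" where
  "delta e = (\<lambda>m. if m = e then 1 else 0)"

lemma finite_down: "finite A \<Longrightarrow> finite {d. \<exists>b\<in>A. mle d b}"
proof -
  assume "finite A"
  have "{d. \<exists>b\<in>A. mle d b} = (\<Union>b\<in>A. {d. mle d b})" by auto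
  then show ?thesis using \<open>finite A\<close> mle_finite by auto
qed

lemma contract_nz: "contract f G d \<noteq> 0 \<Longrightarrow> \<exists>b. G b \<noteq> 0 \<and> mle d b"
proof -
  assume "contract f G d \<noteq> 0"
  then obtain b where "b \<in> {b. G b \<noteq> 0 \<and> mle d b}"
    unfolding contract_def by (meson sum.not_neutral_contains_not_neutral)
  then show ?thesis by blast
qed

lemma dp_poly_contract: "dp_poly G \<Longrightarrow> dp_poly (contract f G)"
  unfolding dp_poly_def
proof -
  assume "finite {b. G b \<noteq> 0}"
  moreover have "{b. contract f G b \<noteq> 0} \<subseteq> {d. \<exists>b\<in>{b. G b \<noteq> 0}. mle d b}"
  proof
    fix x assume "x \<in> {b. contract f G b \<noteq> 0}"
    then obtain b where "G b \<noteq> 0" "mle x b" using contract_nz by blast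
    then show "x \<in> {d. \<exists>b\<in>{b. G b \<noteq> 0}. mle d b}" by blast
  qed
  ultimately show "finite {b. contract f G b \<noteq> 0}" using finite_down finite_subset by blast
qed

lemma sub_bij_aux:
  fixes f h :: "mon \<Rightarrow> 'k::field"
  assumes cb: "mle c b"
  shows "(\<Sum>a\<in>{a. mle a (msub b c)}. f a * h (msub (msub b c) a))
       = (\<Sum>d\<in>{d. mle c d \<and> mle d b}. h (msub d c) * f (msub b d))"
proof (rule sum.reindex_bij_witness[of _ "\<lambda>d. msub b d" "\<lambda>a. msub b a"])
  fix a assume "a \<in> {a. mle a (msub b c)}"
  then have a: "mle a b" "mle c (msub b a)" using mle_msub_iff[OF cb] by auto
  show "msub b (msub b a) = a" using a by (simp add: msub_msub)
  show "msub b a \<in> {d. mle c d \<and> mle d b}" using a mle_msub by auto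
  show "h (msub (msub b a) c) * f (msub b (msub b a)) = f a * h (msub (msub b c) a)"
    using a by (simp add: msub_msub msub_comm3 mult.commute)
next
  fix d assume "d \<in> {d. mle c d \<and> mle d b}"
  then have d: "mle c d" "mle d b" by auto
  show "msub b (msub b d) = d" using d by (simp add: msub_msub)
  show "msub b d \<in> {a. mle a (msub b c)}" using d mle_msub_iff[OF cb] mle_msub msub_msub
    by (metis mem_Collect_eq)
qed

lemma contract_assoc:
  assumes G: "dp_poly G"
  shows "contract (smult_ser f h) G = contract h (contract f G)"
proof
  fix c
  define S where "S = {b. G b \<noteq> 0}"
  define A where "A = {d. \<exists>b\<in>S. mle d b}"
  have fS: "finite S" using G by (simp add: dp_poly_def S_def)
  have fA: "finite A" unfolding A_def using fS by (rule finite_down)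
  have sA: "{d. contract f G d \<noteq> 0} \<subseteq> A"
  proof
    fix x assume "x \<in> {d. contract f G d \<noteq> 0}"
    then obtain b where "G b \<noteq> 0" "mle x b" using contract_nz by blast
    then show "x \<in> A" unfolding A_def S_def by blast
  qed
  have cf: "contract f G d = (\<Sum>b\<in>S. if mle d b then f (msub b d) * G b else 0)" for d
    by (rule contract_alt[OF fS]) (simp add: S_def)
  have "contract h (contract f G) c = (\<Sum>d\<in>A. if mle c d then h (msub d c) * contract f G d else 0)"
    by (rule contract_alt[OF fA sA])
  also have "\<dots> = (\<Sum>d\<in>A. \<Sum>b\<in>S. if mle c d \<and> mle d b then h (msub d c) * f (msub b d) * G b else 0)"
  proof (rule sum.cong[OF refl])
    fix d
    show "(if mle c d then h (msub d c) * contract f G d else 0) =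
       (\<Sum>b\<in>S. if mle c d \<and> mle d b then h (msub d c) * f (msub b d) * G b else 0)"
      by (cases "mle c d") (simp_all add: cf sum_distrib_left mult.assoc if_distrib cong: if_cong)
  qed
  also have "\<dots> = (\<Sum>b\<in>S. \<Sum>d\<in>A. if mle c d \<and> mle d b then h (msub d c) * f (msub b d) * G b else 0)"
    by (rule sum.swap)
  also have "\<dots> = (\<Sum>b\<in>S. if mle c b then (\<Sum>a\<in>{a. mle a (msub b c)}. f a * h (msub (msub b c) a)) * G b else 0)"
  proof (rule sum.cong[OF refl])
    fix b assume b: "b \<in> S"
    have "(\<Sum>d\<in>A. if mle c d \<and> mle d b then h (msub d c) * f (msub b d) * G b else 0)
        = (\<Sum>d\<in>{d\<in>A. mle c d \<and> mle d b}. h (msub d c) * f (msub b d) * G b)"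
      using fA by (simp add: sum.inter_filter)
    also have "{d\<in>A. mle c d \<and> mle d b} = {d. mle c d \<and> mle d b}"
      using b unfolding A_def by blast
    finally have e: "(\<Sum>d\<in>A. if mle c d \<and> mle d b then h (msub d c) * f (msub b d) * G b else 0)
        = (\<Sum>d\<in>{d. mle c d \<and> mle d b}. h (msub d c) * f (msub b d)) * G b"
      by (simp add: sum_distrib_right)
    show "(\<Sum>d\<in>A. if mle c d \<and> mle d b then h (msub d c) * f (msub b d) * G b else 0) =
         (if mle c b then (\<Sum>a\<in>{a. mle a (msub b c)}. f a * h (msub (msub b c) a)) * G b else 0)"
    proof (cases "mle c b")
      case True
      then show ?thesis using e sub_bij_aux[OF True, of f h] by simp
    next
      case False
      have E: "{d. mle c d \<and> mle d b} = {}" using False mle_trans by blast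
      show ?thesis by (simp only: e E sum.empty mult_zero_left False if_False)
    qed
  qed
  also have "\<dots> = contract (smult_ser f h) G c"
    by (simp add: contract_alt[OF fS] S_def smult_ser_def)
  finally show "contract (smult_ser f h) G c = contract h (contract f G) c" by simp
qed

lemma smult_ser_comm: "smult_ser f h = smult_ser h f"
proof
  fix c
  show "smult_ser f h c = smult_ser h f c"
    unfolding smult_ser_def
  proof (rule sum.reindex_bij_witness[of _ "\<lambda>a. msub c a" "\<lambda>a. msub c a"])
    fix a assume a: "a \<in> {a. mle a c}"
    show "msub c (msub c a) = a" using a by (simp add: msub_msub)
    show "msub c a \<in> {a. mle a c}" by (simp add: mle_msub)
    show "h (msub c a) * f (msub c (msub c a)) = f a * h (msub c a)"
      using a by (simp add: msub_msub mult.commute)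
  qed (simp_all add: msub_msub mle_msub)
qed



lemma sum_fun_app: "(\<Sum>x\<in>X. F x) m = (\<Sum>x\<in>X. F x m)"
  by (induction X rule: infinite_finite_induct) auto

definition sc :: "'k::field \<Rightarrow> (mon \<Rightarrow> 'k) \<Rightarrow> (mon \<Rightarrow> 'k)" where
  "sc c f = (\<lambda>m. c * f m)"

lemma sc_app[simp]: "sc c f m = c * f m" by (simp add: sc_def)

interpretation vs: vector_space "sc :: 'k::field \<Rightarrow> (mon \<Rightarrow> 'k) \<Rightarrow> (mon \<Rightarrow> 'k)"
  by unfold_locales (auto simp: sc_def fun_eq_iff algebra_simps)

lemma contract_add: "contract (f1 + f2) G = contract f1 G + contract f2 G"
  unfolding contract_def by (auto simp: fun_eq_iff sum.distrib algebra_simps)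
lemma contract_sc: "contract (sc a f) G = sc a (contract f G)"
  unfolding contract_def by (auto simp: fun_eq_iff sum_distrib_left algebra_simps)
lemma contract_zero[simp]: "contract 0 G = 0"
  unfolding contract_def by (auto simp: fun_eq_iff)
lemma contract_zero2[simp]: "contract (\<lambda>_. 0) G = 0"
  unfolding contract_def by (auto simp: fun_eq_iff)
lemma contract_uminus: "contract (- f) G = - contract f G"
  unfolding contract_def by (auto simp: fun_eq_iff sum_negf)
lemma contract_diff: "contract (f1 - f2) G = contract f1 G - contract f2 G"
  unfolding contract_def by (auto simp: fun_eq_iff sum_subtractf algebra_simps)
lemma contract_sum: "contract (\<Sum>x\<in>X. F x) G = (\<Sum>x\<in>X. contract (F x) G)"
proof (induction X rule: infinite_finite_induct)
  case (insert x F)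
  then show ?case by (simp only: sum.insert[OF insert(1,2)] contract_add)
qed simp_all

lemma contract_addG:
  assumes "dp_poly G1" "dp_poly G2"
  shows "contract f (G1 + G2) = contract f G1 + contract f G2"
proof
  fix c
  define A where "A = {b. G1 b \<noteq> 0} \<union> {b. G2 b \<noteq> 0}"
  have fA: "finite A" using assms by (simp add: A_def dp_poly_def)
  have "contract f (G1 + G2) c = (\<Sum>b\<in>A. if mle c b then f (msub b c) * (G1 + G2) b else 0)"
    by (rule contract_alt[OF fA]) (auto simp: A_def)
  also have "\<dots> = (\<Sum>b\<in>A. (if mle c b then f (msub b c) * G1 b else 0) + (if mle c b then f (msub b c) * G2 b else 0))"
    by (intro sum.cong) (auto simp: algebra_simps)
  also have "\<dots> = contract f G1 c + contract f G2 c"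
    by (simp add: sum.distrib contract_alt[OF fA, of G1] contract_alt[OF fA, of G2] A_def)
  finally show "contract f (G1 + G2) c = (contract f G1 + contract f G2) c" by simp
qed

lemma contract_addG':
  assumes "dp_poly G1" "dp_poly G2"
  shows "contract f (\<lambda>b. G1 b + G2 b) = contract f G1 + contract f G2"
  using contract_addG[OF assms] by (simp add: plus_fun_def)

lemma dp_poly_add: "dp_poly G1 \<Longrightarrow> dp_poly G2 \<Longrightarrow> dp_poly (\<lambda>b. G1 b + G2 b)"
  unfolding dp_poly_def by (rule finite_subset[of _ "{b. G1 b \<noteq> 0} \<union> {b. G2 b \<noteq> 0}"]) auto

lemma contract_delta:
  assumes G: "dp_poly G"
  shows "contract (delta e) G c = G (madd c e)"
proof -
  define A where "A = {b. G b \<noteq> 0}"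
  have fA: "finite A" using G by (simp add: A_def dp_poly_def)
  have "contract (delta e) G c = (\<Sum>b\<in>A. if mle c b then delta e (msub b c) * G b else 0)"
    by (rule contract_alt[OF fA]) (simp add: A_def)
  also have "\<dots> = (\<Sum>b\<in>A. if b = madd c e then G b else 0)"
  proof (intro sum.cong refl)
    fix b
    show "(if mle c b then delta e (msub b c) * G b else 0) = (if b = madd c e then G b else 0)"
      by (cases "mle c b") (auto simp: delta_def mle_add_sub)
  qed
  also have "\<dots> = G (madd c e)"
    using fA by (simp add: sum.delta A_def)
  finally show ?thesis .
qed



definition indep_mod :: "(mon \<Rightarrow> 'k::field) set \<Rightarrow> (mon \<Rightarrow> 'k) set \<Rightarrow> bool" where
  "indep_mod X W \<longleftrightarrow> (\<forall>c. (\<lambda>m. \<Sum>x\<in>X. c x * x m) \<in> W \<longrightarrow> (\<forall>x\<in>X. c x = 0))"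

lemma qdim_alt: "qdim V W = Sup {card X | X. finite X \<and> X \<subseteq> V \<and> indep_mod X W}"
  unfolding qdim_def indep_mod_def by simp

lemma finite_lowdeg: "finite {m::mon. mdeg m < N}"
proof -
  have "{m::mon. mdeg m < N} \<subseteq> {m. mle m (N,N,N,N)}"
  proof
    fix m :: mon assume "m \<in> {m. mdeg m < N}"
    then show "m \<in> {m. mle m (N,N,N,N)}" by (cases m rule: prod_cases4) auto
  qed
  then show ?thesis using mle_finite finite_subset by blast
qed

lemma delta_app: "delta e m = (if m = e then 1 else 0)"
  by (simp add: delta_def)

lemma sum_delta_expand:
  fixes u :: "mon \<Rightarrow> 'k::field"
  assumes "finite T" "\<And>m. u m \<noteq> 0 \<Longrightarrow> m \<in> T"
  shows "u = (\<Sum>m\<in>T. sc (u m) (delta m))"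
proof
  fix m'
  have "(\<Sum>m\<in>T. sc (u m) (delta m)) m' = (\<Sum>m\<in>T. if m' = m then u m else 0)"
    by (auto simp: sum_fun_app delta_app intro!: sum.cong)
  also have "\<dots> = (if m' \<in> T then u m' else 0)"
    using assms(1) by (simp add: sum.delta)
  also have "\<dots> = u m'" using assms(2) by metis
  finally show "u m' = (\<Sum>m\<in>T. sc (u m) (delta m)) m'" by simp
qed

lemma span_delta:
  fixes u :: "mon \<Rightarrow> 'k::field"
  assumes "finite T" "\<And>m. u m \<noteq> 0 \<Longrightarrow> m \<in> T"
  shows "u \<in> vs.span (delta ` T)"
proof -
  have "(\<Sum>m\<in>T. sc (u m) (delta m)) \<in> vs.span (delta ` T)"
    by (intro vs.span_sum vs.span_scale vs.span_base) auto
  moreover have "u = (\<Sum>m\<in>T. sc (u m) (delta m))"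
    by (rule sum_delta_expand[OF assms(1)]) (rule assms(2))
  ultimately show ?thesis by simp
qed

lemma indep_mod_inj_aux:
  fixes x y :: "mon \<Rightarrow> 'k::field"
  assumes "finite X" "x \<in> X" "y \<in> X" "x \<noteq> y"
  shows "(\<lambda>m. \<Sum>z\<in>X. (if z = x then 1 else if z = y then -1 else 0) * z m) = (\<lambda>m. x m - y m)"
proof
  fix m
  have "(\<Sum>z\<in>X. (if z = x then 1 else if z = y then -1 else 0) * z m)
      = (\<Sum>z\<in>X. (if z = x then x m else 0) + (if z = y then - y m else 0))"
    using assms(4) by (intro sum.cong) auto
  also have "\<dots> = x m - y m" using assms by (simp add: sum.distrib sum.delta)
  finally show "(\<Sum>z\<in>X. (if z = x then 1 else if z = y then -1 else 0) * z m) = x m - y m" .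
qed

lemma indep_modD: "indep_mod X W \<Longrightarrow> (\<lambda>m. \<Sum>x\<in>X. c x * x m) \<in> W \<Longrightarrow> x \<in> X \<Longrightarrow> c x = 0"
  unfolding indep_mod_def by blast

lemma qdim_bound:
  fixes X :: "(mon \<Rightarrow> 'k::field) set"
  assumes W: "mpow N \<subseteq> W" and fX: "finite X" and ind: "indep_mod X W"
  shows "card X \<le> card {m::mon. mdeg m < N}"
proof -
  define T where "T = {m::mon. mdeg m < N}"
  have fT: "finite T" unfolding T_def by (rule finite_lowdeg)
  define tr :: "(mon \<Rightarrow> 'k) \<Rightarrow> (mon \<Rightarrow> 'k)" where "tr f = (\<lambda>m. if mdeg m < N then f m else 0)" for f
  have inj: "inj_on tr X"
  proof (rule inj_onI, rule ccontr)
    fix x y assume xy: "x \<in> X" "y \<in> X" "tr x = tr y" "x \<noteq> y"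
    let ?c = "\<lambda>z. if z = x then 1 else if z = y then -1 else (0::'k)"
    have "(\<lambda>m. \<Sum>z\<in>X. ?c z * z m) = (\<lambda>m. x m - y m)"
      by (rule indep_mod_inj_aux[OF fX xy(1,2,4)])
    also have "\<dots> \<in> mpow N"
    proof -
      have "x m = y m" if "mdeg m < N" for m
        using fun_cong[OF xy(3), of m] that by (simp add: tr_def)
      then show ?thesis by (simp add: mpow_def)
    qed
    finally have "(\<lambda>m. \<Sum>z\<in>X. ?c z * z m) \<in> W" using W by blast
    then have "?c x = 0" by (rule indep_modD[OF ind _ xy(1)])
    then show False by simp
  qed
  have indep: "vs.independent (tr ` X)"
  proof (rule vs.independent_if_scalars_zero)
    show "finite (tr ` X)" using fX by simp
    fix f y assume sum0: "(\<Sum>x\<in>tr ` X. sc (f x) x) = 0" and y: "y \<in> tr ` X"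
    have "(\<Sum>x\<in>X. sc (f (tr x)) (tr x)) = 0"
      using sum0 by (simp add: sum.reindex[OF inj])
    then have "(\<lambda>m. \<Sum>x\<in>X. f (tr x) * x m) \<in> mpow N"
    proof -
      assume h: "(\<Sum>x\<in>X. sc (f (tr x)) (tr x)) = 0"
      have "(\<Sum>x\<in>X. f (tr x) * x m) = 0" if "mdeg m < N" for m
        using fun_cong[OF h, of m] that by (simp add: sum_fun_app tr_def)
      then show ?thesis by (simp add: mpow_def)
    qed
    then have mem: "(\<lambda>m. \<Sum>x\<in>X. f (tr x) * x m) \<in> W" using W by blast
    have "\<forall>x\<in>X. f (tr x) = 0"
    proof
      fix x assume "x \<in> X"
      then show "f (tr x) = 0" by (rule indep_modD[OF ind mem])
    qed
    then show "f y = 0" using y by blast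
  qed
  have sp: "tr ` X \<subseteq> vs.span (delta ` T)"
  proof
    fix u assume "u \<in> tr ` X"
    then have "\<And>m. u m \<noteq> 0 \<Longrightarrow> m \<in> T" by (auto simp: tr_def T_def split: if_splits)
    then show "u \<in> vs.span (delta ` T)" by (rule span_delta[OF fT])
  qed
  have "card (tr ` X) \<le> card (delta ` T :: (mon \<Rightarrow> 'k) set)"
    using vs.independent_span_bound[OF _ indep sp] fT by simp
  also have "\<dots> \<le> card T" using fT by (rule card_image_le)
  finally show ?thesis using card_image[OF inj] by (simp add: T_def)
qed

lemma qdim_ge:
  fixes X :: "(mon \<Rightarrow> 'k::field) set"
  assumes W: "mpow N \<subseteq> W" and fX: "finite X" and XV: "X \<subseteq> V" and ind: "indep_mod X W"
  shows "card X \<le> qdim V W"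
proof -
  have bdd: "bdd_above {card X | X :: (mon \<Rightarrow> 'k) set. finite X \<and> X \<subseteq> V \<and> indep_mod X W}"
    by (rule bdd_aboveI[of _ "card {m::mon. mdeg m < N}"]) (use qdim_bound[OF W] in blast)
  show ?thesis unfolding qdim_alt
    by (rule cSup_upper[OF _ bdd]) (use fX XV ind in blast)
qed

lemma qdim_attained:
  fixes V W :: "(mon \<Rightarrow> 'k::field) set"
  assumes W: "mpow N \<subseteq> W"
  shows "\<exists>X. finite X \<and> X \<subseteq> V \<and> indep_mod X W \<and> card X = qdim V W"
proof -
  define S where "S = {card X | X :: (mon \<Rightarrow> 'k) set. finite X \<and> X \<subseteq> V \<and> indep_mod X W}"
  have "S \<subseteq> {..card {m::mon. mdeg m < N}}"
    unfolding S_def using qdim_bound[OF W] by auto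
  then have fS: "finite S" using finite_subset by blast
  have "0 \<in> S" unfolding S_def by (rule CollectI, rule exI[of _ "{}"]) (simp add: indep_mod_def)
  then have "S \<noteq> {}" by blast
  then have "Sup S \<in> S" using fS by (simp add: cSup_eq_Max)
  then show ?thesis unfolding qdim_alt S_def[symmetric] by (auto simp: S_def)
qed



definition lowdeg :: "nat \<Rightarrow> (mon \<Rightarrow> 'k::zero) \<Rightarrow> bool" where
  "lowdeg k X \<longleftrightarrow> (\<forall>c. k \<le> mdeg c \<longrightarrow> X c = 0)"

lemma lowdegD: "lowdeg k X \<Longrightarrow> k \<le> mdeg c \<Longrightarrow> X c = 0"
  unfolding lowdeg_def by blast
lemma lowdegI: "(\<And>c. k \<le> mdeg c \<Longrightarrow> X c = 0) \<Longrightarrow> lowdeg k X"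
  unfolding lowdeg_def by blast
lemma mpowD: "f \<in> mpow i \<Longrightarrow> mdeg a < i \<Longrightarrow> f a = 0"
  unfolding mpow_def by blast
lemma mpowI: "(\<And>a. mdeg a < i \<Longrightarrow> f a = 0) \<Longrightarrow> f \<in> mpow i"
  unfolding mpow_def by blast

lemma mpow_iff: "f \<in> mpow i \<longleftrightarrow> (\<forall>a. mdeg a < i \<longrightarrow> f a = 0)"
  by (simp add: mpow_def)

lemma ann_iff: "f \<in> ann G \<longleftrightarrow> contract f G = 0"
  by (simp add: ann_def zero_fun_def)

lemma delta_mpow: "k \<le> mdeg c \<Longrightarrow> delta c \<in> mpow k"
  by (auto simp: mpow_iff delta_app)

lemma contract_zero_if:
  assumes "\<And>b. X b \<noteq> 0 \<Longrightarrow> mle c b \<Longrightarrow> h (msub b c) = 0"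
  shows "contract h X c = 0"
  unfolding contract_def using assms by (intro sum.neutral) simp

lemma colon_iff:
  fixes G f :: "mon \<Rightarrow> 'k::field"
  assumes G: "dp_poly G"
  shows "f \<in> colon_pre G k \<longleftrightarrow> lowdeg k (contract f G)"
proof
  assume f: "f \<in> colon_pre G k"
  show "lowdeg k (contract f G)" unfolding lowdeg_def
  proof (intro allI impI)
    fix c assume c: "k \<le> mdeg c"
    have "smult_ser f (delta c) \<in> ann G" using f delta_mpow[OF c] unfolding colon_pre_def by blast
    then have "contract (smult_ser f (delta c)) G = 0" by (simp add: ann_iff)
    then have "contract (delta c) (contract f G) (0,0,0,0) = 0"
      by (simp only: contract_assoc[OF G] zero_fun_def)
    then show "contract f G c = 0"
      by (simp only: contract_delta[OF dp_poly_contract[OF G]] madd_zero)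
  qed
next
  assume low: "lowdeg k (contract f G)"
  show "f \<in> colon_pre G k" unfolding colon_pre_def
  proof (intro CollectI ballI)
    fix h :: "mon \<Rightarrow> 'k" assume h: "h \<in> mpow k"
    have "contract h (contract f G) = 0"
    proof
      fix c
      have "contract h (contract f G) c = 0"
      proof (rule contract_zero_if)
        fix b assume bnz: "contract f G b \<noteq> 0" and cb: "mle c b"
        have "mdeg b < k"
        proof (rule ccontr)
          assume "\<not> mdeg b < k"
          then have "contract f G b = 0" using low lowdegD by (metis not_le)
          then show False using bnz by simp
        qed
        moreover have "mdeg (msub b c) \<le> mdeg b" using mdeg_msub[OF cb] by simp
        ultimately show "h (msub b c) = 0" using h mpowD by (metis le_less_trans)
      qed
      then show "contract h (contract f G) c = 0 c" by simp
    qed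
    then show "smult_ser f h \<in> ann G" by (simp only: ann_iff contract_assoc[OF G])
  qed
qed

lemma ssum_iff: "F \<in> ssum A B \<longleftrightarrow> (\<exists>a b. F = (\<lambda>c. a c + b c) \<and> a \<in> A \<and> b \<in> B)"
  by (simp add: ssum_def)

abbreviation "kk G u i \<equiv> dp_deg G + 1 - u - i"

lemma C_pre_elim:
  fixes G F :: "mon \<Rightarrow> 'k::field"
  assumes G: "dp_poly G" and F: "F \<in> C_pre G u i"
  shows "\<exists>a m n. F = a + m + n \<and> a \<in> mpow i \<and> lowdeg (kk G u i) (contract a G)
     \<and> m \<in> mpow (Suc i) \<and> contract n G = 0"
proof -
  from F obtain x n where Fx: "F = (\<lambda>c. x c + n c)" and n: "n \<in> ann G"
    and x: "x \<in> ssum (mB_pow_pre G i \<inter> colon_pre G (kk G u i)) (mpow (i+1))"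
    unfolding C_pre_def ssum_iff[of F] by blast
  from x obtain a' m where xa: "x = (\<lambda>c. a' c + m c)" and a': "a' \<in> mB_pow_pre G i"
    "a' \<in> colon_pre G (kk G u i)" and m: "m \<in> mpow (i+1)"
    unfolding ssum_iff[of x] by blast
  from a'(1) obtain p n' where ap: "a' = (\<lambda>c. p c + n' c)" and p: "p \<in> mpow i" and n': "n' \<in> ann G"
    unfolding mB_pow_pre_def ssum_iff[of a'] by blast
  have "contract a' G = contract p G + contract n' G"
    using ap contract_add[of p n' G] by (simp add: plus_fun_def)
  then have "contract p G = contract a' G" using n' by (simp add: ann_iff)
  then have low: "lowdeg (kk G u i) (contract p G)" using a'(2) colon_iff[OF G] by simp
  have e1: "F = p + m + (n' + n)" using Fx xa ap by (simp add: fun_eq_iff algebra_simps)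
  have e2: "contract (n' + n) G = 0" using n n' by (simp add: contract_add ann_iff)
  have e3: "m \<in> mpow (Suc i)" using m by simp
  show ?thesis
    by (rule exI[of _ p], rule exI[of _ m], rule exI[of _ "n' + n"]) (intro conjI e1 e2 e3 p low)
qed

lemma C_pre_intro:
  fixes G a m n :: "mon \<Rightarrow> 'k::field"
  assumes G: "dp_poly G" and a: "a \<in> mpow i" "lowdeg (kk G u i) (contract a G)"
    and m: "m \<in> mpow (Suc i)" and n: "contract n G = 0"
  shows "a + m + n \<in> C_pre G u i"
proof -
  have "\<exists>aa b. a = (\<lambda>c. aa c + b c) \<and> aa \<in> mpow i \<and> b \<in> ann G"
  proof (rule exI[of _ a], rule exI[of _ "\<lambda>_. 0"], intro conjI)
    show "a = (\<lambda>c. a c + (\<lambda>_. 0) c)" by simp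
    show "(\<lambda>_. 0) \<in> ann G" by (simp add: ann_def zero_fun_def)
  qed (rule a(1))
  then have "a \<in> mB_pow_pre G i" unfolding mB_pow_pre_def ssum_iff[of a] .
  moreover have "a \<in> colon_pre G (kk G u i)" using a(2) colon_iff[OF G] by simp
  ultimately have "a \<in> mB_pow_pre G i \<inter> colon_pre G (kk G u i)" by blast
  moreover have "m \<in> mpow (i+1)" using m by simp
  ultimately have xm: "(\<lambda>c. a c + m c) \<in> ssum (mB_pow_pre G i \<inter> colon_pre G (kk G u i)) (mpow (i+1))"
    by (rule ssum_iff[THEN iffD2, OF exI, OF exI, OF conjI[OF refl conjI]])
  have nm: "n \<in> ann G" using n by (simp add: ann_iff)
  have eq: "a + m + n = (\<lambda>c. a c + m c + n c)" by (simp add: fun_eq_iff)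
  have "\<exists>aa b. a + m + n = (\<lambda>c. aa c + b c) \<and>
        aa \<in> ssum (mB_pow_pre G i \<inter> colon_pre G (kk G u i)) (mpow (i + 1)) \<and> b \<in> ann G"
    by (rule exI[of _ "\<lambda>c. a c + m c"], rule exI[of _ n]) (intro conjI eq xm nm)
  then have "a + m + n \<in> ssum (ssum (mB_pow_pre G i \<inter> colon_pre G (kk G u i)) (mpow (i + 1))) (ann G)"
    by (rule ssum_iff[THEN iffD2])
  then show ?thesis by (simp only: C_pre_def)
qed

lemma mpow_sub_C_pre:
  fixes G :: "mon \<Rightarrow> 'k::field"
  assumes G: "dp_poly G"
  shows "mpow (Suc i) \<subseteq> C_pre G u i"
proof
  fix m :: "mon \<Rightarrow> 'k" assume m: "m \<in> mpow (Suc i)"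
  have "(0::mon\<Rightarrow>'k) + m + 0 \<in> C_pre G u i"
  proof (rule C_pre_intro[OF G])
    show "(0::mon\<Rightarrow>'k) \<in> mpow i" by (simp add: mpow_iff)
    show "lowdeg (kk G u i) (contract (0::mon\<Rightarrow>'k) G)" by (simp add: lowdeg_def)
    show "contract (0::mon\<Rightarrow>'k) G = 0" by simp
  qed (rule m)
  then show "m \<in> C_pre G u i" by (simp only: add_0_left add_0_right)
qed



definition hom :: "nat \<Rightarrow> (mon \<Rightarrow> 'k::zero) \<Rightarrow> bool" where
  "hom d f \<longleftrightarrow> (\<forall>m. f m \<noteq> 0 \<longrightarrow> mdeg m = d)"

definition zw :: "mon \<Rightarrow> nat" where
  "zw m = (case m of (a,b,c,d) \<Rightarrow> c + d)"

lemma zw_simp[simp]: "zw (a,b,c,d) = c + d" by (simp add: zw_def)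

definition isD :: "(mon \<Rightarrow> 'k::zero) \<Rightarrow> bool" where
  "isD f \<longleftrightarrow> (\<forall>m. zw m \<noteq> 0 \<longrightarrow> f m = 0)"

definition trunc :: "nat \<Rightarrow> (mon \<Rightarrow> 'k::zero) \<Rightarrow> (mon \<Rightarrow> 'k)" where
  "trunc d f = (\<lambda>m. if mdeg m = d then f m else 0)"

lemma homD: "hom d f \<Longrightarrow> f m \<noteq> 0 \<Longrightarrow> mdeg m = d" unfolding hom_def by blast
lemma homI: "(\<And>m. f m \<noteq> 0 \<Longrightarrow> mdeg m = d) \<Longrightarrow> hom d f" unfolding hom_def by blast
lemma isDD: "isD f \<Longrightarrow> zw m \<noteq> 0 \<Longrightarrow> f m = 0" unfolding isD_def by blast
lemma isDI: "(\<And>m. zw m \<noteq> 0 \<Longrightarrow> f m = 0) \<Longrightarrow> isD f" unfolding isD_def by blast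

lemma zw_mle: "mle c b \<Longrightarrow> zw c \<le> zw b"
  by (cases c rule: prod_cases4, cases b rule: prod_cases4) auto
lemma zw_msub: "mle c b \<Longrightarrow> zw (msub b c) = zw b - zw c"
  by (cases c rule: prod_cases4, cases b rule: prod_cases4) auto
lemma zw_madd[simp]: "zw (madd a b) = zw a + zw b"
  by (cases a rule: prod_cases4, cases b rule: prod_cases4) auto
lemma zw_le_mdeg: "zw m \<le> mdeg m"
  by (cases m rule: prod_cases4) auto

lemma contract_nz2:
  assumes "contract f G c \<noteq> 0"
  shows "\<exists>b. G b \<noteq> 0 \<and> mle c b \<and> f (msub b c) \<noteq> 0"
proof -
  obtain b where b: "b \<in> {b. G b \<noteq> 0 \<and> mle c b}" "f (msub b c) * G b \<noteq> 0"
    using assms unfolding contract_def by (rule sum.not_neutral_contains_not_neutral)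
  then show ?thesis by (intro exI[of _ b]) simp
qed

lemma contract_nz_hom:
  assumes "hom d G" "contract f G c \<noteq> 0"
  shows "mdeg c \<le> d"
proof -
  obtain b where "G b \<noteq> 0" "mle c b" using contract_nz[OF assms(2)] by blast
  then show ?thesis using homD[OF assms(1)] mle_mdeg by fastforce
qed

lemma contract_hom_trunc:
  assumes "hom d G"
  shows "contract f G c = contract (trunc (d - mdeg c) f) G c"
  unfolding contract_def
proof (rule sum.cong[OF refl])
  fix b assume b: "b \<in> {b. G b \<noteq> 0 \<and> mle c b}"
  then have "G b \<noteq> 0" by simp
  then have "mdeg b = d" by (rule homD[OF assms])
  moreover have "mle c b" using b by simp
  ultimately have "mdeg b = d" "mle c b" by simp_all
  then have "mdeg (msub b c) = d - mdeg c" using mdeg_msub by simp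
  then show "f (msub b c) * G b = trunc (d - mdeg c) f (msub b c) * G b"
    by (simp add: trunc_def)
qed

lemma contract_hom:
  assumes "hom d G" "hom e f"
  shows "hom (d - e) (contract f G)"
proof (rule homI)
  fix c assume nz: "contract f G c \<noteq> 0"
  then obtain b where b: "G b \<noteq> 0" "mle c b" "f (msub b c) \<noteq> 0"
    using contract_nz2 by blast
  have "mdeg b = d" using homD[OF assms(1) b(1)] .
  moreover have "mdeg (msub b c) = e" using homD[OF assms(2) b(3)] .
  moreover have "mdeg (msub b c) = mdeg b - mdeg c" using mdeg_msub[OF b(2)] .
  moreover have "mdeg c \<le> mdeg b" using mle_mdeg[OF b(2)] .
  ultimately show "mdeg c = d - e" by linarith
qed

lemma contract_hom_zero:
  assumes "hom d G" "hom e f" "d < e"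
  shows "contract f G = 0"
proof
  fix c
  show "contract f G c = 0 c"
  proof (rule ccontr)
    assume nz: "contract f G c \<noteq> 0 c"
    then obtain b where b: "G b \<noteq> 0" "mle c b" "f (msub b c) \<noteq> 0"
      using contract_nz2[of f G c] by auto
    have "mdeg b = d" using homD[OF assms(1) b(1)] .
    moreover have "mdeg (msub b c) = e" using homD[OF assms(2) b(3)] .
    moreover have "mdeg (msub b c) = mdeg b - mdeg c" using mdeg_msub[OF b(2)] .
    ultimately show False using assms(3) by linarith
  qed
qed

lemma contract_isD:
  assumes "isD G"
  shows "isD (contract f G)"
proof (rule isDI)
  fix c assume "zw c \<noteq> 0"
  show "contract f G c = 0"
  proof (rule contract_zero_if)
    fix b assume "G b \<noteq> 0" "mle c b"
    then have "zw b = 0" using isDD[OF assms] by blast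
    then have False using zw_mle[OF \<open>mle c b\<close>] \<open>zw c \<noteq> 0\<close> by simp
    then show "f (msub b c) = 0" ..
  qed
qed

lemma contract_zwf_isD:
  assumes "isD G" "\<And>m. zw m = 0 \<Longrightarrow> f m = 0"
  shows "contract f G = 0"
proof
  fix c
  have "contract f G c = 0"
  proof (rule contract_zero_if)
    fix b assume b: "G b \<noteq> 0" "mle c b"
    then have "zw b = 0" using isDD[OF assms(1)] by blast
    then have "zw (msub b c) = 0" using zw_msub[OF b(2)] by simp
    then show "f (msub b c) = 0" using assms(2) by blast
  qed
  then show "contract f G c = 0 c" by simp
qed

lemma trunc_mpow: "m \<in> mpow (Suc i) \<Longrightarrow> trunc i m = 0"
proof
  fix a assume "m \<in> mpow (Suc i)"
  then show "trunc i m a = 0 a" unfolding trunc_def using mpowD[of m "Suc i" a] by simp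
qed

lemma hom_mpow: "hom i f \<Longrightarrow> f \<in> mpow i"
  by (rule mpowI) (metis homD less_irrefl)



lemma zero_mpow[simp]: "0 \<in> mpow i" by (simp add: mpow_iff)

locale ctx =
  fixes g h :: "mon \<Rightarrow> 'k::field"
  assumes gD: "isD g" and ghom: "hom 14 g" and gpoly: "dp_poly g"
      and hhom: "hom 13 h" and hpoly: "dp_poly h" and gnz: "g \<noteq> 0"
begin

abbreviation GG :: "mon \<Rightarrow> 'k" where "GG \<equiv> (\<lambda>b. g b + h b)"

lemma Gpoly: "dp_poly GG" by (rule dp_poly_add[OF gpoly hpoly])

lemma cG: "contract f GG = contract f g + contract f h"
  by (rule contract_addG'[OF gpoly hpoly])

lemma cG_app: "contract f GG c = contract f g c + contract f h c"
  by (simp add: cG)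

lemma degG: "dp_deg GG = 14"
proof -
  obtain b where b: "g b \<noteq> 0" using gnz by (auto simp: fun_eq_iff)
  have b14: "mdeg b = 14" using homD[OF ghom b] .
  have "h b = 0" using homD[OF hhom, of b] b14 by auto
  then have bG: "GG b \<noteq> 0" using b by simp
  have fin: "finite {b. GG b \<noteq> 0}" using Gpoly by (simp add: dp_poly_def)
  have le: "mdeg x \<le> 14" if "GG x \<noteq> 0" for x
  proof (cases "g x = 0")
    case True
    then have "h x \<noteq> 0" using that by simp
    then show ?thesis using homD[OF hhom] by fastforce
  next
    case False
    then show ?thesis using homD[OF ghom] by fastforce
  qed
  have "Max (mdeg ` {b. GG b \<noteq> 0}) = 14"
  proof (rule Max_eqI)
    show "finite (mdeg ` {b. GG b \<noteq> 0})" using fin by simp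
    show "\<And>y. y \<in> mdeg ` {b. GG b \<noteq> 0} \<Longrightarrow> y \<le> 14" using le by blast
    show "14 \<in> mdeg ` {b. GG b \<noteq> 0}" using bG b14 by force
  qed
  then show ?thesis by (simp add: dp_deg_def)
qed

lemma kkG: "kk GG u i = 15 - u - i"
  using degG by simp

lemma isD_contract_g: "isD (contract f g)"
  by (rule contract_isD[OF gD])

lemma notC2:
  assumes F: "hom i F" "contract F g = 0" and c: "zw c \<noteq> 0" "contract F h c \<noteq> 0" and i: "i \<le> 13"
  shows "F \<notin> C_pre GG 2 i"
proof
  assume "F \<in> C_pre GG 2 i"
  then obtain a m n where e: "F = a + m + n" and a: "a \<in> mpow i" "lowdeg (kk GG 2 i) (contract a GG)"
    and m: "m \<in> mpow (Suc i)" and n: "contract n GG = 0"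
    using C_pre_elim[OF Gpoly] by blast
  have hc: "hom (13 - i) (contract F h)" using contract_hom[OF hhom F(1)] .
  have dc: "mdeg c = 13 - i" using homD[OF hc c(2)] .
  have a0: "contract a GG c = 0" using lowdegD[OF a(2)] dc by (simp add: degG)
  have "a = F - m - n" using e by simp
  then have "contract a GG = contract F GG - contract m GG - contract n GG"
    by (simp add: contract_diff)
  then have "contract a GG c = contract F GG c - contract m GG c"
    using n by simp
  moreover have "contract F GG c = contract F h c" using F(2) by (simp add: cG_app)
  moreover have "contract m g c = 0" using isDD[OF isD_contract_g c(1)] .
  moreover have "contract m h c = 0"
  proof -
    have "contract m h c = contract (trunc (13 - mdeg c) m) h c"
      by (rule contract_hom_trunc[OF hhom])
    also have "trunc (13 - mdeg c) m = 0" using dc i trunc_mpow[OF m] by simp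
    finally show ?thesis by simp
  qed
  ultimately show False using a0 c(2) by (simp add: cG_app)
qed

lemma C_pre_sub: "mpow (Suc i) \<subseteq> C_pre GG u i"
  by (rule mpow_sub_C_pre[OF Gpoly])

lemma FA:
  assumes HB: "HB GG 1 i = 0" and i: "i \<le> 13" and f: "hom i f" "contract f g = 0"
    and c: "zw c \<noteq> 0"
  shows "contract f h c = 0"
proof (rule ccontr)
  assume nz: "contract f h c \<noteq> 0"
  have fC1: "f \<in> C_pre GG 1 i"
  proof -
    have "f + 0 + 0 \<in> C_pre GG 1 i"
    proof (rule C_pre_intro[OF Gpoly])
      show "f \<in> mpow i" by (rule hom_mpow[OF f(1)])
      show "lowdeg (kk GG 1 i) (contract f GG)"
      proof (rule lowdegI)
        fix c' assume "kk GG 1 i \<le> mdeg c'"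
        then have "mdeg c' \<noteq> 13 - i" using i by (simp add: degG)
        then have "contract f h c' = 0" using homD[OF contract_hom[OF hhom f(1)]] by blast
        then show "contract f GG c' = 0" using f(2) by (simp add: cG_app)
      qed
    qed simp_all
    then show ?thesis by simp
  qed
  have ind: "indep_mod {f} (C_pre GG 2 i)"
    unfolding indep_mod_def
  proof (intro allI impI ballI)
    fix cc :: "(mon \<Rightarrow> 'k) \<Rightarrow> 'k" and x assume mem: "(\<lambda>m. \<Sum>x\<in>{f}. cc x * x m) \<in> C_pre GG 2 i" and x: "x \<in> {f}"
    show "cc x = 0"
    proof (rule ccontr)
      assume ne: "cc x \<noteq> 0"
      have "sc (cc f) f \<notin> C_pre GG 2 i"
      proof (rule notC2)
        show "hom i (sc (cc f) f)" using f(1) by (auto simp: hom_def)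
        show "contract (sc (cc f) f) g = 0" using f(2) by (simp only: contract_sc) (simp add: sc_def zero_fun_def)
        show "zw c \<noteq> 0" by (rule c)
        show "contract (sc (cc f) f) h c \<noteq> 0" using ne nz x by (simp add: contract_sc)
      qed (rule i)
      moreover have "sc (cc f) f = (\<lambda>m. \<Sum>x\<in>{f}. cc x * x m)" by (simp add: sc_def)
      ultimately show False using mem by simp
    qed
  qed
  have "card {f} \<le> HB GG 1 i"
    unfolding HB_def by (rule qdim_ge[OF C_pre_sub]) (use fC1 ind in \<open>auto simp: numeral_2_eq_2\<close>)
  then show False using HB by simp
qed

end


lemma exists_sub:
  assumes "t \<le> mdeg b"
  shows "\<exists>e. mle e b \<and> mdeg e = t"
proof -
  obtain b1 b2 b3 b4 where b: "b = (b1,b2,b3,b4)" by (cases b rule: prod_cases4)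
  let ?e = "(min t b1, min (t - b1) b2, min (t - b1 - b2) b3, t - b1 - b2 - b3)"
  have "mle ?e b \<and> mdeg ?e = t" using assms by (simp add: b min_def) arith
  then show ?thesis by blast
qed

lemma split_zw2:
  assumes "zw b \<ge> 2" "mdeg b = 13"
  shows "\<exists>e c. b = madd c e \<and> mdeg e = 6 \<and> zw e \<noteq> 0 \<and> zw c \<noteq> 0"
proof -
  obtain b1 b2 b3 b4 where b: "b = (b1,b2,b3,b4)" by (cases b rule: prod_cases4)
  define u1 :: mon where "u1 = (if b3 \<ge> 1 then (0,0,1,0) else (0,0,0,1))"
  have u1: "mle u1 b" "zw u1 = 1" "mdeg u1 = 1" using assms by (auto simp: u1_def b)
  define b' where "b' = msub b u1"
  have b': "zw b' \<ge> 1" "mdeg b' = 12" using assms u1 by (auto simp: b'_def zw_msub mdeg_msub)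
  obtain b1' b2' b3' b4' where bb': "b' = (b1',b2',b3',b4')" by (cases b' rule: prod_cases4)
  define u2 :: mon where "u2 = (if b3' \<ge> 1 then (0,0,1,0) else (0,0,0,1))"
  have u2: "mle u2 b'" "zw u2 = 1" "mdeg u2 = 1" using b' by (auto simp: u2_def bb')
  define b'' where "b'' = msub b' u2"
  have b'': "mdeg b'' = 11" using b' u2 by (simp add: b''_def mdeg_msub)
  obtain e' where e': "mle e' b''" "mdeg e' = 5" using exists_sub[of 5 b''] b'' by auto
  define e where "e = madd u1 e'"
  define c where "c = madd u2 (msub b'' e')"
  have "b = madd c e"
  proof -
    have "madd c e = madd (madd u2 (msub b'' e')) (madd u1 e')" by (simp add: c_def e_def)
    also have "\<dots> = madd u1 (madd u2 (madd (msub b'' e') e'))"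
      by (metis madd_assoc madd_comm)
    also have "madd (msub b'' e') e' = b''" using mle_sub_add[OF e'(1)] .
    also have "madd u2 b'' = b'" unfolding b''_def using mle_add_sub[OF u2(1)] .
    also have "madd u1 b' = b" unfolding b'_def using mle_add_sub[OF u1(1)] .
    finally show ?thesis by simp
  qed
  moreover have "mdeg e = 6" using u1 e' by (simp add: e_def)
  moreover have "zw e \<noteq> 0" using u1 by (simp add: e_def)
  moreover have "zw c \<noteq> 0" using u2 by (simp add: c_def)
  ultimately show ?thesis by blast
qed

context ctx begin

lemma delta_hom: "hom (mdeg e) (delta e)"
  by (rule homI) (simp add: delta_app split: if_splits)

lemma delta_g: "zw e \<noteq> 0 \<Longrightarrow> contract (delta e) g = 0"
  by (rule contract_zwf_isD[OF gD]) (auto simp: delta_app)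

lemma hstruct:
  assumes HB6: "HB GG 1 6 = 0" and hb: "h b \<noteq> 0"
  shows "zw b \<le> 1"
proof (rule ccontr)
  assume "\<not> zw b \<le> 1"
  then have z2: "zw b \<ge> 2" by simp
  have "mdeg b = 13" using homD[OF hhom hb] .
  then obtain e c where ec: "b = madd c e" "mdeg e = 6" "zw e \<noteq> 0" "zw c \<noteq> 0"
    using split_zw2[OF z2] by blast
  have "contract (delta e) h c = 0"
    using FA[OF HB6 _ _ delta_g[OF ec(3)] ec(4)] delta_hom[of e] ec(2) by simp
  moreover have "contract (delta e) h c = h b"
    using contract_delta[OF hpoly] ec(1) by simp
  ultimately show False using hb by simp
qed

end


definition lin :: "((mon \<Rightarrow> 'k::field) \<Rightarrow> (mon \<Rightarrow> 'k)) \<Rightarrow> bool" where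
  "lin f \<longleftrightarrow> (\<forall>x y. f (x + y) = f x + f y) \<and> (\<forall>c x. f (sc c x) = sc c (f x))"

lemma lin_add: "lin f \<Longrightarrow> f (x + y) = f x + f y" unfolding lin_def by blast
lemma lin_sc: "lin f \<Longrightarrow> f (sc c x) = sc c (f x)" unfolding lin_def by blast
lemma lin_zero: "lin f \<Longrightarrow> f 0 = 0"
  using lin_sc[of f 0 0] by (simp add: sc_def zero_fun_def)
lemma lin_sum: "lin f \<Longrightarrow> f (\<Sum>x\<in>X. F x) = (\<Sum>x\<in>X. f (F x))"
proof (induction X rule: infinite_finite_induct)
  case (insert x Y)
  then show ?case by (simp only: sum.insert[OF insert(1,2)] lin_add)
next
  case (infinite A)
  then show ?case by (metis lin_zero sum.infinite)
next
  case empty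
  then show ?case by (metis lin_zero sum.empty)
qed
lemma lin_diff: "lin f \<Longrightarrow> f (x - y) = f x - f y"
proof -
  assume l: "lin f"
  have "f (x - y) + f y = f x" using lin_add[OF l, of "x - y" y] by simp
  then show ?thesis by (simp add: algebra_simps)
qed

lemma lin_contract: "lin (\<lambda>f. contract f G)"
  unfolding lin_def by (simp add: contract_add contract_sc)


lemma fam_inj:
  fixes v :: "'a \<Rightarrow> (mon \<Rightarrow> 'k::field)"
  assumes fX: "finite X" and ind: "\<And>cc. (\<Sum>x\<in>X. sc (cc x) (v x)) = 0 \<Longrightarrow> \<forall>x\<in>X. cc x = 0"
  shows "inj_on v X"
proof (rule inj_onI, rule ccontr)
  fix x y assume xy: "x \<in> X" "y \<in> X" "v x = v y" "x \<noteq> y"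
  let ?c = "\<lambda>z. if z = x then 1 else if z = y then -1 else (0::'k)"
  have "(\<Sum>z\<in>X. sc (?c z) (v z)) = (\<Sum>z\<in>X. (if z = x then v x else 0) + (if z = y then - v y else 0))"
    using xy(4) by (intro sum.cong) (auto simp: sc_def fun_eq_iff)
  also have "\<dots> = v x - v y" using fX xy by (simp add: sum.distrib sum.delta)
  also have "\<dots> = 0" using xy(3) by simp
  finally have "?c x = 0" using ind[of ?c] xy(1) by blast
  then show False by simp
qed

lemma fam_indep:
  fixes v :: "'a \<Rightarrow> (mon \<Rightarrow> 'k::field)"
  assumes fX: "finite X" and ind: "\<And>cc. (\<Sum>x\<in>X. sc (cc x) (v x)) = 0 \<Longrightarrow> \<forall>x\<in>X. cc x = 0"
  shows "vs.independent (v ` X)"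
proof (rule vs.independent_if_scalars_zero)
  show "finite (v ` X)" using fX by simp
  have inj: "inj_on v X" by (rule fam_inj[OF fX ind])
  fix f y assume s: "(\<Sum>x\<in>v ` X. sc (f x) x) = 0" and y: "y \<in> v ` X"
  have "(\<Sum>x\<in>X. sc (f (v x)) (v x)) = 0" using s by (simp add: sum.reindex[OF inj])
  then have "\<forall>x\<in>X. f (v x) = 0" by (rule ind)
  then show "f y = 0" using y by blast
qed

lemma fam_card:
  fixes v :: "'a \<Rightarrow> (mon \<Rightarrow> 'k::field)"
  assumes fX: "finite X" and ind: "\<And>cc. (\<Sum>x\<in>X. sc (cc x) (v x)) = 0 \<Longrightarrow> \<forall>x\<in>X. cc x = 0"
  shows "card (v ` X) = card X"
  using card_image[OF fam_inj[OF assms]] .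

lemma span_card_eq:
  fixes A T :: "(mon \<Rightarrow> 'k::field) set"
  assumes fT: "finite T" and indA: "vs.independent A" and AT: "A \<subseteq> vs.span T"
    and c: "card A = card T"
  shows "T \<subseteq> vs.span A"
proof
  fix t assume t: "t \<in> T"
  show "t \<in> vs.span A"
  proof (rule ccontr)
    assume nt: "t \<notin> vs.span A"
    have fA: "finite A" using vs.independent_span_bound[OF fT indA AT] by simp
    have "vs.independent (insert t A)" by (rule vs.independent_insertI[OF nt indA])
    moreover have "insert t A \<subseteq> vs.span T" using AT t vs.span_base by blast
    ultimately have "card (insert t A) \<le> card T" using vs.independent_span_bound[OF fT] by blast
    moreover have "t \<notin> A" using nt vs.span_base by blast
    ultimately show False using fA c by simp
  qed
qed

lemma span_repr:
  fixes S :: "(mon \<Rightarrow> 'k::field) set"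
  assumes "finite S" "x \<in> vs.span S"
  shows "\<exists>u. x = (\<Sum>v\<in>S. sc (u v) v)"
  using assms vs.span_finite by auto

lemma sc_neg: "sc (- a) x = - sc a x"
  by (simp add: sc_def fun_eq_iff)

lemma rank_lemma:
  fixes B C :: "(mon \<Rightarrow> 'k::field) set"
  assumes fB: "finite B" and indB: "vs.independent B" and CB: "C \<subseteq> B" and l: "lin f"
    and ker: "\<And>x. x \<in> vs.span B \<Longrightarrow> f x = 0 \<Longrightarrow> x \<in> vs.span C"
  shows "inj_on f (B - C) \<and> vs.independent (f ` (B - C))"
proof -
  have fBC: "finite (B - C)" "finite C" using fB CB finite_subset by auto
  have key: "\<forall>x\<in>B - C. cc x = 0" if s: "(\<Sum>x\<in>B - C. sc (cc x) (f x)) = 0" for cc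
  proof -
    have "f (\<Sum>x\<in>B - C. sc (cc x) x) = (\<Sum>x\<in>B - C. sc (cc x) (f x))"
      by (simp only: lin_sum[OF l] lin_sc[OF l])
    then have f0: "f (\<Sum>x\<in>B - C. sc (cc x) x) = 0" using s by simp
    have "(\<Sum>x\<in>B - C. sc (cc x) x) \<in> vs.span B"
    proof (rule vs.span_sum)
      fix x assume "x \<in> B - C"
      then have "x \<in> vs.span B" using vs.span_base by blast
      then show "sc (cc x) x \<in> vs.span B" by (rule vs.span_scale)
    qed
    then have "(\<Sum>x\<in>B - C. sc (cc x) x) \<in> vs.span C" using ker f0 by blast
    then obtain u where u: "(\<Sum>x\<in>B - C. sc (cc x) x) = (\<Sum>x\<in>C. sc (u x) x)"
      using span_repr[OF fBC(2)] by blast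
    define w where "w x = (if x \<in> C then - u x else cc x)" for x
    have s1: "(\<Sum>x\<in>B - C. sc (w x) x) = (\<Sum>x\<in>B - C. sc (cc x) x)"
      by (rule sum.cong) (simp_all add: w_def)
    have s2: "(\<Sum>x\<in>C. sc (w x) x) = - (\<Sum>x\<in>C. sc (u x) x)"
      by (simp only: sum_negf[symmetric] sc_neg[symmetric]) (rule sum.cong, simp_all add: w_def)
    have "(\<Sum>x\<in>B. sc (w x) x) = (\<Sum>x\<in>B - C. sc (w x) x) + (\<Sum>x\<in>C. sc (w x) x)"
      using sum.subset_diff[OF CB fB] .
    also have "\<dots> = 0" using s1 s2 u by simp
    finally have "(\<Sum>x\<in>B. sc (w x) x) = 0" .
    then have "\<forall>x\<in>B. w x = 0" using vs.independentD[OF indB fB subset_refl] by blast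
    then show ?thesis unfolding w_def by force
  qed
  show ?thesis
    using fam_inj[of "B - C" f] fam_indep[of "B - C" f] key fBC(1) by blast
qed



definition Md :: "nat \<Rightarrow> mon set" where
  "Md d = {m. mdeg m = d \<and> zw m = 0}"

lemma Md_eq: "Md d = (\<lambda>a. (a, d - a, 0, 0)) ` {..d}"
proof
  show "Md d \<subseteq> (\<lambda>a. (a, d - a, 0, 0)) ` {..d}"
  proof
    fix m assume "m \<in> Md d"
    then obtain a b c e where m: "m = (a,b,c,e)" "a + b + c + e = d" "c + e = 0"
      unfolding Md_def by (cases m rule: prod_cases4) auto
    then have "m = (\<lambda>a. (a, d - a, 0, 0)) a" "a \<in> {..d}" by auto
    then show "m \<in> (\<lambda>a. (a, d - a, 0, 0)) ` {..d}" by blast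
  qed
  show "(\<lambda>a. (a, d - a, 0, 0)) ` {..d} \<subseteq> Md d" by (auto simp: Md_def)
qed

lemma finite_Md: "finite (Md d)" by (simp add: Md_eq)

lemma card_Md: "card (Md d) = Suc d"
proof -
  have "inj_on (\<lambda>a. (a, d - a, 0::nat, 0::nat)) {..d}" by (rule inj_onI) auto
  then show ?thesis by (simp add: Md_eq card_image)
qed

lemma inj_delta: "inj (delta :: mon \<Rightarrow> mon \<Rightarrow> 'k::field)"
proof (rule injI)
  fix a b :: mon assume "(delta a :: mon \<Rightarrow> 'k) = delta b"
  then have "(delta a :: mon \<Rightarrow> 'k) a = delta b a" by simp
  then show "a = b" by (simp add: delta_app split: if_splits)
qed

lemma card_delta_Md: "card (delta ` Md d :: (mon \<Rightarrow> 'k::field) set) = Suc d"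
  using card_image[OF inj_on_subset[OF inj_delta subset_UNIV]] card_Md by metis

lemma finite_delta_Md: "finite (delta ` Md d :: (mon \<Rightarrow> 'k::field) set)"
  using finite_Md by simp

definition Pd :: "nat \<Rightarrow> (mon \<Rightarrow> 'k::field) set" where
  "Pd d = {f. hom d f \<and> isD f}"

lemma Pd_supp: "f \<in> Pd d \<Longrightarrow> f m \<noteq> 0 \<Longrightarrow> m \<in> Md d"
  unfolding Pd_def Md_def using homD isDD by fastforce

lemma Pd_span: "Pd d \<subseteq> vs.span (delta ` Md d)"
proof
  fix f :: "mon \<Rightarrow> 'a" assume "f \<in> Pd d"
  then show "f \<in> vs.span (delta ` Md d)"
    by (intro span_delta[OF finite_Md]) (rule Pd_supp)
qed

lemma delta_Pd: "m \<in> Md d \<Longrightarrow> delta m \<in> Pd d"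
  unfolding Pd_def Md_def by (auto simp: hom_def isD_def delta_app)

lemma Pd_subspace: "vs.subspace (Pd d)"
  unfolding vs.subspace_def Pd_def
proof (intro conjI ballI allI, goal_cases)
  case 1
  then show ?case by (simp add: hom_def isD_def zero_fun_def)
next
  case (2 x y)
  then have "hom d x" "isD x" "hom d y" "isD y" by auto
  then have hx: "hom d x" "isD x" and hy: "hom d y" "isD y" by auto
  have "hom d (x + y)"
  proof (rule homI)
    fix m assume "(x + y) m \<noteq> 0"
    then have "x m \<noteq> 0 \<or> y m \<noteq> 0" by auto
    then show "mdeg m = d" using homD[OF hx(1)] homD[OF hy(1)] by blast
  qed
  moreover have "isD (x + y)"
  proof (rule isDI)
    fix m assume "zw m \<noteq> 0"
    then show "(x + y) m = 0" using isDD[OF hx(2)] isDD[OF hy(2)] by simp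
  qed
  ultimately show ?case by simp
next
  case (3 c x)
  then have "hom d x" "isD x" by auto
  then have hx: "hom d x" "isD x" by auto
  have "hom d (sc c x)"
  proof (rule homI)
    fix m assume "sc c x m \<noteq> 0"
    then have "x m \<noteq> 0" by auto
    then show "mdeg m = d" using homD[OF hx(1)] by blast
  qed
  moreover have "isD (sc c x)"
  proof (rule isDI)
    fix m assume "zw m \<noteq> 0"
    then show "sc c x m = 0" using isDD[OF hx(2)] by simp
  qed
  ultimately show ?case by simp
qed

lemma Pd_sum: "(\<And>x. x \<in> X \<Longrightarrow> F x \<in> Pd d) \<Longrightarrow> (\<Sum>x\<in>X. F x) \<in> Pd d"
  by (rule vs.subspace_sum[OF Pd_subspace])
lemma Pd_sc: "f \<in> Pd d \<Longrightarrow> sc c f \<in> Pd d"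
  by (rule vs.subspace_scale[OF Pd_subspace])
lemma Pd_add: "f \<in> Pd d \<Longrightarrow> f' \<in> Pd d \<Longrightarrow> f + f' \<in> Pd d"
  by (rule vs.subspace_add[OF Pd_subspace])

lemma Pd_span_sub: "vs.span (Pd d) = Pd d"
  by (rule vs.span_eq_iff[THEN iffD2, OF Pd_subspace])

lemma Pd_spanned:
  fixes A :: "(mon \<Rightarrow> 'k::field) set"
  assumes "vs.independent A" "A \<subseteq> Pd d" "card A = Suc d"
  shows "Pd d \<subseteq> vs.span A"
proof -
  have "A \<subseteq> vs.span (delta ` Md d)" using assms(2) Pd_span by blast
  then have "delta ` Md d \<subseteq> vs.span A"
    by (rule span_card_eq[OF finite_delta_Md assms(1)]) (simp add: assms(3) card_delta_Md)
  then have "vs.span (delta ` Md d) \<subseteq> vs.span A"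
    using vs.span_minimal vs.subspace_span by blast
  then show ?thesis using Pd_span by blast
qed

lemma Pd_indep_bound:
  fixes A :: "(mon \<Rightarrow> 'k::field) set"
  assumes "vs.independent A" "A \<subseteq> Pd d"
  shows "finite A \<and> card A \<le> Suc d"
proof -
  have "A \<subseteq> vs.span (delta ` Md d)" using assms(2) Pd_span by blast
  then show ?thesis using vs.independent_span_bound[OF finite_delta_Md assms(1)] card_delta_Md
    by metis
qed

definition Rpart :: "(mon \<Rightarrow> 'k::zero) \<Rightarrow> (mon \<Rightarrow> 'k)" where
  "Rpart f = (\<lambda>m. if zw m = 0 then f m else 0)"

lemma trunc_mpow': "f \<in> mpow i \<Longrightarrow> j < i \<Longrightarrow> trunc j f = 0"
proof
  fix a assume "f \<in> mpow i" "j < i"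
  then show "trunc j f a = 0 a" unfolding trunc_def using mpowD[of f i a] by simp
qed

lemma mpow_subspace: "vs.subspace (mpow i)"
  unfolding vs.subspace_def mpow_def by (auto simp: sc_def zero_fun_def)

lemma mpow_sum: "(\<And>x. x \<in> X \<Longrightarrow> F x \<in> mpow i) \<Longrightarrow> (\<Sum>x\<in>X. F x) \<in> mpow i"
  by (rule vs.subspace_sum[OF mpow_subspace])
lemma mpow_sc: "f \<in> mpow i \<Longrightarrow> sc c f \<in> mpow i"
  by (rule vs.subspace_scale[OF mpow_subspace])

lemma C_pre_choice:
  fixes G :: "mon \<Rightarrow> 'k::field"
  assumes G: "dp_poly G" and X: "X \<subseteq> C_pre G u i"
  shows "\<exists>A M N. \<forall>x\<in>X. x = A x + M x + N x \<and> A x \<in> mpow i \<and> lowdeg (kk G u i) (contract (A x) G)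
     \<and> M x \<in> mpow (Suc i) \<and> contract (N x) G = 0"
proof -
  have "\<forall>x\<in>X. \<exists>t. x = fst t + fst (snd t) + snd (snd t) \<and> fst t \<in> mpow i \<and> lowdeg (kk G u i) (contract (fst t) G)
     \<and> fst (snd t) \<in> mpow (Suc i) \<and> contract (snd (snd t)) G = 0"
  proof
    fix x assume "x \<in> X"
    then obtain a m n where "x = a + m + n \<and> a \<in> mpow i \<and> lowdeg (kk G u i) (contract a G)
     \<and> m \<in> mpow (Suc i) \<and> contract n G = 0" using C_pre_elim[OF G] X by blast
    then show "\<exists>t. x = fst t + fst (snd t) + snd (snd t) \<and> fst t \<in> mpow i \<and> lowdeg (kk G u i) (contract (fst t) G)
     \<and> fst (snd t) \<in> mpow (Suc i) \<and> contract (snd (snd t)) G = 0"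
      by (intro exI[of _ "(a, m, n)"]) simp
  qed
  then obtain T where T: "\<forall>x\<in>X. x = fst (T x) + fst (snd (T x)) + snd (snd (T x)) \<and> fst (T x) \<in> mpow i
     \<and> lowdeg (kk G u i) (contract (fst (T x)) G)
     \<and> fst (snd (T x)) \<in> mpow (Suc i) \<and> contract (snd (snd (T x))) G = 0"
    by (rule bchoice[THEN exE]) blast
  show ?thesis
    by (rule exI[of _ "\<lambda>x. fst (T x)"], rule exI[of _ "\<lambda>x. fst (snd (T x))"],
        rule exI[of _ "\<lambda>x. snd (snd (T x))"]) (rule T)
qed

context ctx begin

lemma cGG_trunc: "contract f GG c = contract (trunc (14 - mdeg c) f) g c + contract (trunc (13 - mdeg c) f) h c"
  by (simp add: cG_app contract_hom_trunc[OF ghom, of f] contract_hom_trunc[OF hhom, of f])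

lemma contract_g_Rpart: "contract f g = contract (Rpart f) g"
proof -
  have "f = Rpart f + (f - Rpart f)" by simp
  then have "contract f g = contract (Rpart f) g + contract (f - Rpart f) g"
    by (metis contract_add)
  moreover have "contract (f - Rpart f) g = 0"
    by (rule contract_zwf_isD[OF gD]) (simp add: Rpart_def)
  ultimately show ?thesis by simp
qed

end


context ctx begin

lemma contract_g_Pd: "r \<in> Pd d \<Longrightarrow> d \<le> 14 \<Longrightarrow> contract r g \<in> Pd (14 - d)"
  unfolding Pd_def using contract_hom[OF ghom] contract_isD[OF gD] by blast

lemma Rpart_trunc_Pd: "Rpart (trunc d f) \<in> Pd d"
  unfolding Pd_def
proof (intro CollectI conjI)
  show "hom d (Rpart (trunc d f))" by (rule homI) (simp add: Rpart_def trunc_def split: if_splits)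
  show "isD (Rpart (trunc d f))" by (rule isDI) (simp add: Rpart_def)
qed

lemma sc_zero: "sc c 0 = 0" by (simp add: sc_def zero_fun_def)
lemma sc_0_left: "sc 0 f = 0" by (simp add: sc_def zero_fun_def)

lemma sum_sc_app: "(\<Sum>x\<in>X. sc (cc x) (F x)) m = (\<Sum>x\<in>X. cc x * F x m)"
  by (simp add: sum_fun_app)

lemma contract_lincomb: "contract (\<Sum>x\<in>X. sc (cc x) (F x)) G = (\<Sum>x\<in>X. sc (cc x) (contract (F x) G))"
  by (simp add: contract_sum contract_sc)

lemma lincomb_decomp:
  assumes "\<forall>x\<in>X. x = A x + M x + N x"
  shows "(\<lambda>m. \<Sum>x\<in>X. cc x * x m) = (\<Sum>x\<in>X. sc (cc x) (A x)) + (\<Sum>x\<in>X. sc (cc x) (M x)) + (\<Sum>x\<in>X. sc (cc x) (N x))"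
proof
  fix m
  have "(\<Sum>x\<in>X. cc x * x m) = (\<Sum>x\<in>X. cc x * A x m + cc x * M x m + cc x * N x m)"
  proof (rule sum.cong[OF refl])
    fix x assume "x \<in> X"
    then have "x m = A x m + M x m + N x m" using assms by (metis plus_fun_apply)
    then show "cc x * x m = cc x * A x m + cc x * M x m + cc x * N x m" by (simp add: algebra_simps)
  qed
  then show "(\<Sum>x\<in>X. cc x * x m) = ((\<Sum>x\<in>X. sc (cc x) (A x)) + (\<Sum>x\<in>X. sc (cc x) (M x)) + (\<Sum>x\<in>X. sc (cc x) (N x))) m"
    by (simp add: sum_fun_app sum.distrib)
qed

lemma phi_facts:
  assumes HB: "HB GG 0 7 = 8"
  shows "(\<forall>r\<in>Pd 7. contract r g = 0 \<longrightarrow> r = 0) \<and> (\<forall>w\<in>Pd 7. \<exists>r\<in>Pd 7. contract r g = w)"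
proof -
  obtain X where X: "finite X" "X \<subseteq> C_pre GG 0 7" "indep_mod X (C_pre GG (Suc 0) 7)" "card X = 8"
    using qdim_attained[OF C_pre_sub[of 7 "Suc 0"], of "C_pre GG 0 7"] HB by (auto simp: HB_def)
  obtain A M N where AMN: "\<forall>x\<in>X. x = A x + M x + N x \<and> A x \<in> mpow 7 \<and> lowdeg (kk GG 0 7) (contract (A x) GG)
     \<and> M x \<in> mpow (Suc 7) \<and> contract (N x) GG = 0"
    using C_pre_choice[OF Gpoly X(2)] by blast
  define r where "r x = Rpart (trunc 7 (A x))" for x
  have rP: "r x \<in> Pd 7" for x unfolding r_def by (rule Rpart_trunc_Pd)
  have key: "contract (A x) GG c = (if mdeg c = 7 then contract (r x) g c else 0)"
    if x: "x \<in> X" and c: "7 \<le> mdeg c" for x c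
  proof -
    have Ax: "A x \<in> mpow 7" using AMN x by blast
    have t13: "trunc (13 - mdeg c) (A x) = 0" by (rule trunc_mpow'[OF Ax]) (use c in simp)
    show ?thesis
    proof (cases "mdeg c = 7")
      case True
      then have "contract (A x) GG c = contract (trunc 7 (A x)) g c"
        using t13 by (simp add: cGG_trunc)
      also have "\<dots> = contract (r x) g c" by (simp add: r_def contract_g_Rpart[symmetric])
      finally show ?thesis using True by simp
    next
      case False
      then have "trunc (14 - mdeg c) (A x) = 0" using c by (intro trunc_mpow'[OF Ax]) simp
      then show ?thesis using t13 False by (simp add: cGG_trunc)
    qed
  qed
  have phind: "\<forall>x\<in>X. cc x = 0" if s: "(\<Sum>x\<in>X. sc (cc x) (contract (r x) g)) = 0" for cc
  proof -
    let ?a = "\<Sum>x\<in>X. sc (cc x) (A x)"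
    let ?m = "\<Sum>x\<in>X. sc (cc x) (M x)"
    let ?n = "\<Sum>x\<in>X. sc (cc x) (N x)"
    have dec: "(\<lambda>m. \<Sum>x\<in>X. cc x * x m) = ?a + ?m + ?n"
      by (rule lincomb_decomp) (use AMN in blast)
    have "?a + ?m + ?n \<in> C_pre GG (Suc 0) 7"
    proof (rule C_pre_intro[OF Gpoly])
      show "?a \<in> mpow 7" using AMN by (intro mpow_sum mpow_sc) blast
      show "?m \<in> mpow (Suc 7)" using AMN by (intro mpow_sum mpow_sc) blast
      have "contract ?n GG = (\<Sum>x\<in>X. sc (cc x) (contract (N x) GG))" by (rule contract_lincomb)
      also have "\<dots> = (\<Sum>x\<in>X. sc (cc x) 0)" using AMN by (intro sum.cong) auto
      also have "\<dots> = 0" by (simp only: sc_zero sum.neutral_const)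
      finally show "contract ?n GG = 0" .
      show "lowdeg (kk GG (Suc 0) 7) (contract ?a GG)"
      proof (rule lowdegI)
        fix c assume "kk GG (Suc 0) 7 \<le> mdeg c"
        then have c: "7 \<le> mdeg c" by (simp add: degG)
        have "contract ?a GG c = (\<Sum>x\<in>X. cc x * contract (A x) GG c)"
          by (simp add: contract_lincomb sum_sc_app)
        also have "\<dots> = (\<Sum>x\<in>X. cc x * (if mdeg c = 7 then contract (r x) g c else 0))"
          using key c by (intro sum.cong) auto
        also have "\<dots> = (if mdeg c = 7 then (\<Sum>x\<in>X. sc (cc x) (contract (r x) g)) c else 0)"
          by (simp add: sum_sc_app)
        also have "\<dots> = 0" using s by simp
        finally show "contract ?a GG c = 0" .
      qed
    qed
    then have mem: "(\<lambda>m. \<Sum>x\<in>X. cc x * x m) \<in> C_pre GG (Suc 0) 7" using dec by simp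
    show ?thesis using indep_modD[OF X(3) mem] by blast
  qed
  have rind: "\<forall>x\<in>X. cc x = 0" if s: "(\<Sum>x\<in>X. sc (cc x) (r x)) = 0" for cc
  proof -
    have "contract (\<Sum>x\<in>X. sc (cc x) (r x)) g = 0" using s by simp
    then have "(\<Sum>x\<in>X. sc (cc x) (contract (r x) g)) = 0" by (simp add: contract_lincomb)
    then show ?thesis by (rule phind)
  qed
  have span_r: "Pd 7 \<subseteq> vs.span (r ` X)"
    by (rule Pd_spanned) (use fam_indep[OF X(1) rind] fam_card[OF X(1) rind] X(4) rP in auto)
  have phP: "contract (r x) g \<in> Pd 7" for x using contract_g_Pd[OF rP] by simp
  have span_ph: "Pd 7 \<subseteq> vs.span ((\<lambda>x. contract (r x) g) ` X)"
    by (rule Pd_spanned) (use fam_indep[OF X(1) phind] fam_card[OF X(1) phind] X(4) phP in auto)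
  have injr: "inj_on r X" by (rule fam_inj[OF X(1) rind])
  have injph: "inj_on (\<lambda>x. contract (r x) g) X" by (rule fam_inj[OF X(1) phind])
  have inj: "r0 = 0" if r0: "r0 \<in> Pd 7" "contract r0 g = 0" for r0
  proof -
    obtain u where u: "r0 = (\<Sum>y\<in>r ` X. sc (u y) y)"
      using span_repr[of "r ` X" r0] X(1) span_r r0(1) by blast
    then have u': "r0 = (\<Sum>x\<in>X. sc (u (r x)) (r x))" by (simp add: sum.reindex[OF injr])
    then have "(\<Sum>x\<in>X. sc (u (r x)) (contract (r x) g)) = 0"
      using r0(2) by (simp add: contract_lincomb)
    then have "\<forall>x\<in>X. u (r x) = 0" by (rule phind)
    then have "r0 = (\<Sum>x\<in>X. sc 0 (r x))" using u' by (metis (no_types, lifting) sum.cong)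
    then show "r0 = 0" by (simp only: sc_0_left sum.neutral_const)
  qed
  have surj: "\<exists>r0\<in>Pd 7. contract r0 g = w" if w: "w \<in> Pd 7" for w
  proof -
    obtain u where u: "w = (\<Sum>y\<in>(\<lambda>x. contract (r x) g) ` X. sc (u y) y)"
      using span_repr[of "(\<lambda>x. contract (r x) g) ` X" w] X(1) span_ph w by blast
    then have "w = (\<Sum>x\<in>X. sc (u (contract (r x) g)) (contract (r x) g))"
      by (simp add: sum.reindex[OF injph])
    also have "\<dots> = contract (\<Sum>x\<in>X. sc (u (contract (r x) g)) (r x)) g"
      by (simp add: contract_lincomb)
    finally have "contract (\<Sum>x\<in>X. sc (u (contract (r x) g)) (r x)) g = w" by simp
    moreover have "(\<Sum>x\<in>X. sc (u (contract (r x) g)) (r x)) \<in> Pd 7"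
      by (intro Pd_sum Pd_sc rP)
    ultimately show ?thesis by blast
  qed
  show ?thesis using inj surj by blast
qed

end


lemma smult_delta: "smult_ser (delta e) f c = (if mle e c then f (msub c e) else 0)"
proof -
  have "smult_ser (delta e) f c = (\<Sum>a\<in>{a. mle a c}. if a = e then f (msub c a) else 0)"
    unfolding smult_ser_def by (intro sum.cong) (auto simp: delta_app)
  also have "\<dots> = (if mle e c then f (msub c e) else 0)"
    using mle_finite[of c] by (simp add: sum.delta')
  finally show ?thesis .
qed

lemma contract_zeroG[simp]: "contract f 0 = 0"
  by (simp add: contract_def zero_fun_def)

definition prd :: "nat \<Rightarrow> (mon \<Rightarrow> 'k::field) \<Rightarrow> (mon \<Rightarrow> 'k) \<Rightarrow> 'k" where
  "prd d f X = (\<Sum>b\<in>Md d. f b * X b)"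

lemma prd_contract:
  assumes f: "f \<in> Pd d" and X: "dp_poly X"
  shows "prd d f X = contract f X (0,0,0,0)"
proof -
  define S where "S = {b. X b \<noteq> 0}"
  have fS: "finite S" using X by (simp add: dp_poly_def S_def)
  have "contract f X (0,0,0,0) = (\<Sum>b\<in>S. f b * X b)"
    by (simp add: contract_alt[OF fS] S_def)
  also have "\<dots> = (\<Sum>b\<in>S \<union> Md d. f b * X b)"
    by (rule sum.mono_neutral_left) (use fS finite_Md S_def in auto)
  also have "\<dots> = (\<Sum>b\<in>Md d. f b * X b)"
  proof (rule sum.mono_neutral_right)
    show "\<forall>i\<in>S \<union> Md d - Md d. f i * X i = 0"
    proof
      fix i assume "i \<in> S \<union> Md d - Md d"
      then have "i \<notin> Md d" by blast
      then have "f i = 0" using Pd_supp[OF f, of i] by blast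
      then show "f i * X i = 0" by simp
    qed
  qed (use fS finite_Md in auto)
  finally show ?thesis by (simp add: prd_def)
qed

lemma prd_lin: "prd d f (\<Sum>i\<in>I. sc (cc i) (v i)) = (\<Sum>i\<in>I. cc i * prd d f (v i))"
  unfolding prd_def by (simp add: sum_fun_app sum_distrib_left sum.swap[of _ "Md d"] algebra_simps)

lemma prd_delta: "m \<in> Md d \<Longrightarrow> prd d f (delta m) = f m"
proof -
  assume m: "m \<in> Md d"
  have "prd d f (delta m) = (\<Sum>b\<in>Md d. if b = m then f b else 0)"
    unfolding prd_def by (rule sum.cong) (auto simp: delta_app)
  also have "\<dots> = f m" using m finite_Md[of d] by (simp add: sum.delta)
  finally show ?thesis .
qed

lemma Pd_eq_zero:
  assumes f: "f \<in> Pd d" and z: "\<And>m. m \<in> Md d \<Longrightarrow> f m = 0"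
  shows "f = 0"
proof
  fix m show "f m = 0 m" using Pd_supp[OF f, of m] z by (cases "f m = 0") auto
qed

context ctx begin

lemma phi3:
  assumes inj7: "\<forall>r\<in>Pd 7. contract r g = 0 \<longrightarrow> r = 0"
    and r: "r \<in> Pd 3" and r0: "contract r g = 0"
  shows "r = 0"
proof -
  define e :: mon where "e = (4,0,0,0)"
  define xr where "xr = smult_ser (delta e) r"
  have xr: "xr c = (if mle e c then r (msub c e) else 0)" for c by (simp add: xr_def smult_delta)
  have "xr \<in> Pd 7"
    unfolding Pd_def
  proof (intro CollectI conjI)
    show "hom 7 xr"
    proof (rule homI)
      fix c assume "xr c \<noteq> 0"
      then have "mle e c" "r (msub c e) \<noteq> 0" using xr[of c] by (auto split: if_splits)
      then show "mdeg c = 7" using homD[of 3 r "msub c e"] r mdeg_msub[of e c]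
        by (auto simp: Pd_def e_def dest: mle_mdeg)
    qed
    show "isD xr"
    proof (rule isDI)
      fix c assume z: "zw c \<noteq> 0"
      show "xr c = 0"
      proof (cases "mle e c")
        case True
        then have "zw (msub c e) \<noteq> 0" using z by (simp add: zw_msub e_def)
        then show ?thesis using xr[of c] True isDD[of r] r by (simp add: Pd_def)
      qed (simp add: xr)
    qed
  qed
  moreover have "contract xr g = 0"
  proof -
    have "contract xr g = contract (smult_ser r (delta e)) g" by (simp add: xr_def smult_ser_comm)
    also have "\<dots> = contract (delta e) (contract r g)" by (rule contract_assoc[OF gpoly])
    also have "\<dots> = 0" using r0 by simp
    finally show ?thesis .
  qed
  ultimately have "xr = 0" using inj7 by blast
  show "r = 0"
  proof
    fix m
    have "xr (madd m e) = r m" using xr[of "madd m e"] by simp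
    then show "r m = 0 m" using \<open>xr = 0\<close> by simp
  qed
qed

lemma contract_h_Rpart:
  assumes hs: "\<And>b. h b \<noteq> 0 \<Longrightarrow> zw b \<le> 1" and c: "zw c \<noteq> 0"
  shows "contract p h c = contract (Rpart p) h c"
proof -
  have "contract (p - Rpart p) h c = 0"
  proof (rule contract_zero_if)
    fix b assume b: "h b \<noteq> 0" "mle c b"
    then have "zw b \<le> 1" using hs by blast
    moreover have "zw c \<le> zw b" using zw_mle[OF b(2)] .
    ultimately have "zw (msub b c) = 0" using zw_msub[OF b(2)] c by simp
    then show "(p - Rpart p) (msub b c) = 0" by (simp add: Rpart_def)
  qed
  then show ?thesis by (simp add: contract_diff)
qed

end


lemma hom_trunc: "hom d (trunc d f)"
  by (rule homI) (simp add: trunc_def split: if_splits)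

lemma hom_mpow_le: "hom d f \<Longrightarrow> i \<le> d \<Longrightarrow> f \<in> mpow i"
  by (rule mpowI) (metis homD not_le)

lemma mpow_add: "f \<in> mpow i \<Longrightarrow> f' \<in> mpow i \<Longrightarrow> f + f' \<in> mpow i"
  by (rule vs.subspace_add[OF mpow_subspace])
lemma mpow_diff: "f \<in> mpow i \<Longrightarrow> f' \<in> mpow i \<Longrightarrow> f - f' \<in> mpow i"
  by (rule vs.subspace_diff[OF mpow_subspace])

lemma contract_swap:
  assumes "dp_poly G"
  shows "contract f (contract A G) = contract A (contract f G)"
  by (metis contract_assoc[OF assms] smult_ser_comm)

lemma trunc_app_eq: "mdeg b = d \<Longrightarrow> trunc d f b = f b"
  by (simp add: trunc_def)

lemma prd_trunc: "prd d f (trunc d X) = prd d f X"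
  unfolding prd_def by (rule sum.cong) (auto simp: Md_def trunc_def)

lemma sum_Inl_Inr:
  fixes F :: "'a + 'a \<Rightarrow> 'b::comm_monoid_add"
  assumes "finite X1" "finite X0"
  shows "(\<Sum>i\<in>Inl ` X1 \<union> Inr ` X0. F i) = (\<Sum>x\<in>X1. F (Inl x)) + (\<Sum>y\<in>X0. F (Inr y))"
proof -
  have "(\<Sum>i\<in>Inl ` X1 \<union> Inr ` X0. F i) = (\<Sum>i\<in>Inl ` X1. F i) + (\<Sum>i\<in>Inr ` X0. F i)"
    by (rule sum.union_disjoint) (use assms in auto)
  also have "\<dots> = (\<Sum>x\<in>X1. F (Inl x)) + (\<Sum>y\<in>X0. F (Inr y))"
    by (simp add: sum.reindex)
  finally show ?thesis .
qed

context ctx begin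

lemma contract_GG_hom4:
  assumes "hom 4 f" "mdeg c \<ge> 10"
  shows "contract f GG c = (if mdeg c = 10 then contract f g c else 0)"
proof -
  have h9: "hom 9 (contract f h)" using contract_hom[OF hhom assms(1)] by simp
  have g10: "hom 10 (contract f g)" using contract_hom[OF ghom assms(1)] by simp
  have "contract f h c = 0" using homD[OF h9, of c] assms(2) by fastforce
  moreover have "mdeg c \<noteq> 10 \<Longrightarrow> contract f g c = 0" using homD[OF g10, of c] by blast
  ultimately show ?thesis by (simp add: cG_app)
qed

lemma U4:
  assumes HB13: "HB GG 1 3 = 6" and HB04: "HB GG 0 4 = 5"
    and inj7: "\<forall>r\<in>Pd 7. contract r g = 0 \<longrightarrow> r = 0"
    and hs: "\<And>b. h b \<noteq> 0 \<Longrightarrow> zw b \<le> 1"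
    and f: "f \<in> Pd 10" and fh: "\<And>c. zw c \<noteq> 0 \<Longrightarrow> contract f h c = 0" and fg: "contract f g = 0"
  shows "f = 0"
proof -
  obtain X1 where X1: "finite X1" "X1 \<subseteq> C_pre GG 1 3" "indep_mod X1 (C_pre GG (Suc 1) 3)" "card X1 = 6"
    using qdim_attained[OF C_pre_sub[of 3 "Suc 1"], of "C_pre GG 1 3"] HB13 by (auto simp: HB_def)
  obtain A1 M1 N1 where AMN1: "\<forall>x\<in>X1. x = A1 x + M1 x + N1 x \<and> A1 x \<in> mpow 3 \<and> lowdeg (kk GG 1 3) (contract (A1 x) GG)
     \<and> M1 x \<in> mpow (Suc 3) \<and> contract (N1 x) GG = 0"
    using C_pre_choice[OF Gpoly X1(2)] by blast
  obtain X0 where X0: "finite X0" "X0 \<subseteq> C_pre GG 0 4" "indep_mod X0 (C_pre GG (Suc 0) 4)" "card X0 = 5"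
    using qdim_attained[OF C_pre_sub[of 4 "Suc 0"], of "C_pre GG 0 4"] HB04 by (auto simp: HB_def)
  obtain A0 M0 N0 where AMN0: "\<forall>x\<in>X0. x = A0 x + M0 x + N0 x \<and> A0 x \<in> mpow 4 \<and> lowdeg (kk GG 0 4) (contract (A0 x) GG)
     \<and> M0 x \<in> mpow (Suc 4) \<and> contract (N0 x) GG = 0"
    using C_pre_choice[OF Gpoly X0(2)] by blast
  have A1m: "A1 x \<in> mpow 3" if "x \<in> X1" for x using AMN1 that by blast
  have A0m: "A0 x \<in> mpow 4" if "x \<in> X0" for x using AMN0 that by blast
  have A1low: "contract (A1 x) GG c = 0" if "x \<in> X1" "11 \<le> mdeg c" for x c
    using AMN1 that lowdegD[of "kk GG 1 3" "contract (A1 x) GG" c] by (simp add: degG)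
  have p1: "Rpart (trunc 3 (A1 x)) = 0" if x: "x \<in> X1" for x
  proof (rule phi3[OF inj7 Rpart_trunc_Pd])
    have "contract (trunc 3 (A1 x)) g = 0"
    proof
      fix c
      show "contract (trunc 3 (A1 x)) g c = 0 c"
      proof (cases "mdeg c = 11")
        case True
        have t2: "trunc 2 (A1 x) = 0" by (rule trunc_mpow'[OF A1m[OF x]]) simp
        have "contract (A1 x) GG c = contract (trunc 3 (A1 x)) g c"
          using True t2 by (simp add: cGG_trunc)
        then show ?thesis using A1low[OF x] True by simp
      next
        case False
        have "hom 11 (contract (trunc 3 (A1 x)) g)"
          using contract_hom[OF ghom hom_trunc[of 3 "A1 x"]] by simp
        then show ?thesis using False homD by fastforce
      qed
    qed
    then show "contract (Rpart (trunc 3 (A1 x))) g = 0" using contract_g_Rpart by metis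
  qed
  define psi where "psi x = trunc 10 (contract (A1 x) GG)" for x
  define chi where "chi y = trunc 10 (contract (A0 y) GG)" for y
  have psiP: "psi x \<in> Pd 10" if x: "x \<in> X1" for x
    unfolding Pd_def
  proof (intro CollectI conjI)
    show "hom 10 (psi x)" unfolding psi_def by (rule hom_trunc)
    show "isD (psi x)"
    proof (rule isDI)
      fix c assume z: "zw c \<noteq> 0"
      show "psi x c = 0"
      proof (cases "mdeg c = 10")
        case True
        have "contract (trunc 4 (A1 x)) g c = 0" using isDD[OF isD_contract_g z] .
        moreover have "contract (trunc 3 (A1 x)) h c = 0"
          using contract_h_Rpart[OF hs z, of "trunc 3 (A1 x)"] p1[OF x] by simp
        ultimately show ?thesis using True by (simp add: psi_def trunc_def cGG_trunc)
      qed (simp add: psi_def trunc_def)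
    qed
  qed
  have chi_eq: "chi y c = contract (trunc 4 (A0 y)) GG c" if y: "y \<in> X0" and c: "mdeg c = 10" for y c
  proof -
    have t3: "trunc 3 (A0 y) = 0" by (rule trunc_mpow'[OF A0m[OF y]]) simp
    have "chi y c = contract (trunc 4 (A0 y)) g c"
      using c t3 by (simp add: chi_def trunc_def cGG_trunc)
    also have "\<dots> = contract (trunc 4 (A0 y)) GG c"
      using contract_GG_hom4[OF hom_trunc, of c "A0 y"] c by simp
    finally show ?thesis .
  qed
  have chiP: "chi y \<in> Pd 10" if y: "y \<in> X0" for y
    unfolding Pd_def
  proof (intro CollectI conjI)
    show "hom 10 (chi y)" unfolding chi_def by (rule hom_trunc)
    show "isD (chi y)"
    proof (rule isDI)
      fix c assume z: "zw c \<noteq> 0"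
      show "chi y c = 0"
      proof (cases "mdeg c = 10")
        case True
        then have "chi y c = contract (trunc 4 (A0 y)) g c"
          using chi_eq[OF y True] contract_GG_hom4[OF hom_trunc, of c "A0 y"] by simp
        then show ?thesis using isDD[OF isD_contract_g z] by simp
      qed (simp add: chi_def trunc_def)
    qed
  qed
  define I where "I = Inl ` X1 \<union> Inr ` X0"
  define v where "v = case_sum psi chi"
  have fI: "finite I" using X1(1) X0(1) by (simp add: I_def)
  have cardI: "card I = 11"
  proof -
    have "card I = card (Inl ` X1 :: ((mon\<Rightarrow>'k) + (mon\<Rightarrow>'k)) set) + card (Inr ` X0 :: ((mon\<Rightarrow>'k) + (mon\<Rightarrow>'k)) set)"
      unfolding I_def by (rule card_Un_disjoint) (use X1(1) X0(1) in auto)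
    also have "\<dots> = 11" using X1(4) X0(4) by (simp add: card_image)
    finally show ?thesis .
  qed
  have vP: "v i \<in> Pd 10" if "i \<in> I" for i using that psiP chiP by (auto simp: I_def v_def)
  have vind: "\<forall>i\<in>I. cc i = 0" if s: "(\<Sum>i\<in>I. sc (cc i) (v i)) = 0" for cc
  proof -
    define S1 where "S1 = (\<Sum>x\<in>X1. sc (cc (Inl x)) (psi x))"
    define S0 where "S0 = (\<Sum>y\<in>X0. sc (cc (Inr y)) (chi y))"
    have S10: "S1 + S0 = 0" using s sum_Inl_Inr[OF X1(1) X0(1), of "\<lambda>i. sc (cc i) (v i)"]
      by (simp add: I_def v_def S1_def S0_def)
    have stepA: "\<forall>x\<in>X1. cc (Inl x) = 0"
    proof -
      let ?a = "\<Sum>x\<in>X1. sc (cc (Inl x)) (A1 x)"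
      let ?m = "\<Sum>x\<in>X1. sc (cc (Inl x)) (M1 x)"
      let ?n = "\<Sum>x\<in>X1. sc (cc (Inl x)) (N1 x)"
      let ?s = "\<Sum>y\<in>X0. sc (cc (Inr y)) (trunc 4 (A0 y))"
      have dec: "(\<lambda>m. \<Sum>x\<in>X1. cc (Inl x) * x m) = ?a + ?m + ?n"
        by (rule lincomb_decomp) (use AMN1 in blast)
      have s4: "?s \<in> mpow 4" by (intro mpow_sum mpow_sc hom_mpow_le[OF hom_trunc]) simp
      have s3: "?s \<in> mpow 3" by (intro mpow_sum mpow_sc hom_mpow_le[OF hom_trunc]) simp
      have "(?a + ?s) + (?m - ?s) + ?n \<in> C_pre GG (Suc 1) 3"
      proof (rule C_pre_intro[OF Gpoly])
        have "?a \<in> mpow 3" using AMN1 by (intro mpow_sum mpow_sc) blast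
        then show "?a + ?s \<in> mpow 3" using s3 by (rule mpow_add)
        have "?m \<in> mpow 4" using AMN1 by (intro mpow_sum mpow_sc) auto
        then show "?m - ?s \<in> mpow (Suc 3)" using s4 mpow_diff by simp
        have "contract ?n GG = (\<Sum>x\<in>X1. sc (cc (Inl x)) (contract (N1 x) GG))" by (rule contract_lincomb)
        also have "\<dots> = (\<Sum>x\<in>X1. sc (cc (Inl x)) 0)" using AMN1 by (intro sum.cong) auto
        also have "\<dots> = 0" by (simp only: sc_zero sum.neutral_const)
        finally show "contract ?n GG = 0" .
        show "lowdeg (kk GG (Suc 1) 3) (contract (?a + ?s) GG)"
        proof (rule lowdegI)
          fix c assume "kk GG (Suc 1) 3 \<le> mdeg c"
          then have c: "10 \<le> mdeg c" by (simp add: degG)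
          have e1: "contract ?a GG c = (\<Sum>x\<in>X1. cc (Inl x) * contract (A1 x) GG c)"
            by (simp add: contract_lincomb sum_sc_app)
          have e2: "contract ?s GG c = (\<Sum>y\<in>X0. cc (Inr y) * contract (trunc 4 (A0 y)) GG c)"
            by (simp add: contract_lincomb sum_sc_app)
          have "contract (?a + ?s) GG c = contract ?a GG c + contract ?s GG c"
            by (simp add: contract_add)
          also have "\<dots> = 0"
          proof (cases "mdeg c = 10")
            case True
            have "contract ?a GG c = S1 c"
              unfolding e1 S1_def sum_sc_app using True by (simp add: psi_def trunc_def)
            moreover have "contract ?s GG c = S0 c"
              unfolding e2 S0_def sum_sc_app using chi_eq True by (intro sum.cong) auto
            ultimately show ?thesis using S10 by (metis plus_fun_apply zero_fun_def)
          next
            case False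
            then have c11: "11 \<le> mdeg c" using c by simp
            have "contract ?a GG c = 0" unfolding e1 using A1low c11 by simp
            moreover have "contract ?s GG c = 0" unfolding e2
              using contract_GG_hom4[OF hom_trunc, of c] c False by simp
            ultimately show ?thesis by simp
          qed
          finally show "contract (?a + ?s) GG c = 0" .
        qed
      qed
      moreover have "(?a + ?s) + (?m - ?s) + ?n = ?a + ?m + ?n" by simp
      ultimately have mem: "(\<lambda>m. \<Sum>x\<in>X1. cc (Inl x) * x m) \<in> C_pre GG (Suc 1) 3" using dec by simp
      show ?thesis using indep_modD[OF X1(3) mem] by blast
    qed
    have S1z: "S1 = 0"
    proof -
      have "S1 = (\<Sum>x\<in>X1. sc 0 (psi x))" unfolding S1_def using stepA by (intro sum.cong) auto
      then show ?thesis by (simp only: sc_0_left sum.neutral_const)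
    qed
    have S0z: "S0 = 0" using S10 S1z by simp
    have stepB: "\<forall>y\<in>X0. cc (Inr y) = 0"
    proof -
      let ?a = "\<Sum>y\<in>X0. sc (cc (Inr y)) (A0 y)"
      let ?m = "\<Sum>y\<in>X0. sc (cc (Inr y)) (M0 y)"
      let ?n = "\<Sum>y\<in>X0. sc (cc (Inr y)) (N0 y)"
      have dec: "(\<lambda>m. \<Sum>y\<in>X0. cc (Inr y) * y m) = ?a + ?m + ?n"
        by (rule lincomb_decomp) (use AMN0 in blast)
      have "?a + ?m + ?n \<in> C_pre GG (Suc 0) 4"
      proof (rule C_pre_intro[OF Gpoly])
        show "?a \<in> mpow 4" using AMN0 by (intro mpow_sum mpow_sc) blast
        show "?m \<in> mpow (Suc 4)" using AMN0 by (intro mpow_sum mpow_sc) blast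
        have "contract ?n GG = (\<Sum>y\<in>X0. sc (cc (Inr y)) (contract (N0 y) GG))" by (rule contract_lincomb)
        also have "\<dots> = (\<Sum>y\<in>X0. sc (cc (Inr y)) 0)" using AMN0 by (intro sum.cong) auto
        also have "\<dots> = 0" by (simp only: sc_zero sum.neutral_const)
        finally show "contract ?n GG = 0" .
        show "lowdeg (kk GG (Suc 0) 4) (contract ?a GG)"
        proof (rule lowdegI)
          fix c assume "kk GG (Suc 0) 4 \<le> mdeg c"
          then have c: "10 \<le> mdeg c" by (simp add: degG)
          have e1: "contract ?a GG c = (\<Sum>y\<in>X0. cc (Inr y) * contract (A0 y) GG c)"
            by (simp add: contract_lincomb sum_sc_app)
          show "contract ?a GG c = 0"
          proof (cases "mdeg c = 10")
            case True
            have "contract ?a GG c = S0 c"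
              unfolding e1 S0_def sum_sc_app using True by (simp add: chi_def trunc_def)
            then show ?thesis using S0z by simp
          next
            case False
            have "contract (A0 y) GG c = 0" if y: "y \<in> X0" for y
            proof -
              have "trunc (14 - mdeg c) (A0 y) = 0" by (rule trunc_mpow'[OF A0m[OF y]]) (use c False in simp)
              moreover have "trunc (13 - mdeg c) (A0 y) = 0" by (rule trunc_mpow'[OF A0m[OF y]]) (use c in simp)
              ultimately show ?thesis by (simp add: cGG_trunc)
            qed
            then show ?thesis unfolding e1 by simp
          qed
        qed
      qed
      then have mem: "(\<lambda>m. \<Sum>y\<in>X0. cc (Inr y) * y m) \<in> C_pre GG (Suc 0) 4" using dec by simp
      show ?thesis using indep_modD[OF X0(3) mem] by blast
    qed
    show ?thesis using stepA stepB by (auto simp: I_def)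
  qed
  have spanI: "Pd 10 \<subseteq> vs.span (v ` I)"
    by (rule Pd_spanned) (use fam_indep[OF fI vind] fam_card[OF fI vind] cardI vP in auto)
  have prd0: "prd 10 f (v i) = 0" if i: "i \<in> I" for i
  proof -
    have fh3: "hom 3 (contract f h)" using contract_hom[OF hhom, of 10 f] f by (simp add: Pd_def)
    have cfG: "contract f GG = contract f h" using fg by (simp add: cG)
    have gen: "prd 10 f (trunc 10 (contract A GG)) = 0" if A: "\<And>b. mdeg b = 3 \<Longrightarrow> zw b = 0 \<Longrightarrow> A b = 0" for A
    proof -
      have "prd 10 f (trunc 10 (contract A GG)) = contract f (contract A GG) (0,0,0,0)"
        by (simp add: prd_trunc prd_contract[OF f dp_poly_contract[OF Gpoly]])
      also have "\<dots> = contract A (contract f h) (0,0,0,0)"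
        by (simp add: contract_swap[OF Gpoly] cfG)
      also have "\<dots> = 0"
      proof (rule contract_zero_if)
        fix b assume b: "contract f h b \<noteq> 0" "mle (0,0,0,0) b"
        have "mdeg b = 3" using homD[OF fh3 b(1)] .
        moreover have "zw b = 0" using fh b(1) by blast
        ultimately show "A (msub b (0,0,0,0)) = 0" using A by simp
      qed
      finally show ?thesis .
    qed
    show ?thesis
    proof (cases i)
      case (Inl x)
      then have x: "x \<in> X1" using i by (auto simp: I_def)
      have "A1 x b = 0" if "mdeg b = 3" "zw b = 0" for b
        using fun_cong[OF p1[OF x], of b] that by (simp add: Rpart_def trunc_def)
      then show ?thesis using gen[of "A1 x"] Inl by (simp add: v_def psi_def)
    next
      case (Inr y)
      then have y: "y \<in> X0" using i by (auto simp: I_def)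
      have "A0 y b = 0" if "mdeg b = 3" for b using mpowD[OF A0m[OF y]] that by simp
      then show ?thesis using gen[of "A0 y"] Inr by (simp add: v_def chi_def)
    qed
  qed
  have zero: "f m = 0" if m: "m \<in> Md 10" for m
  proof -
    have "delta m \<in> vs.span (v ` I)" using spanI delta_Pd[OF m] by blast
    then obtain u where u: "delta m = (\<Sum>z\<in>v ` I. sc (u z) z)"
      using span_repr[of "v ` I"] fI by blast
    have "f m = prd 10 f (delta m)" by (rule prd_delta[OF m, symmetric])
    also have "\<dots> = (\<Sum>z\<in>v ` I. u z * prd 10 f z)" using u by (simp add: prd_lin)
    also have "\<dots> = 0" using prd0 by (intro sum.neutral) auto
    finally show ?thesis .
  qed
  show "f = 0" by (rule Pd_eq_zero[OF f zero])
qed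

end


definition mulm :: "mon \<Rightarrow> (mon \<Rightarrow> 'k::field) \<Rightarrow> (mon \<Rightarrow> 'k)" where
  "mulm e f = smult_ser (delta e) f"

lemma mulm_app: "mulm e f c = (if mle e c then f (msub c e) else 0)"
  by (simp add: mulm_def smult_delta)

lemma mulm_madd: "mulm e f (madd c e) = f c"
  by (simp add: mulm_app)

lemma lin_mulm: "lin (mulm e)"
  unfolding lin_def by (auto simp: fun_eq_iff mulm_app algebra_simps)

lemma mulm_Pd: "f \<in> Pd d \<Longrightarrow> zw e = 0 \<Longrightarrow> mulm e f \<in> Pd (d + mdeg e)"
  unfolding Pd_def
proof (intro CollectI conjI)
  assume f: "f \<in> {f. hom d f \<and> isD f}" and e: "zw e = 0"
  show "hom (d + mdeg e) (mulm e f)"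
  proof (rule homI)
    fix c assume "mulm e f c \<noteq> 0"
    then have ec: "mle e c" "f (msub c e) \<noteq> 0" by (auto simp: mulm_app split: if_splits)
    then have "mdeg (msub c e) = d" using f homD by blast
    then show "mdeg c = d + mdeg e" using mdeg_msub[OF ec(1)] mle_mdeg[OF ec(1)] by simp
  qed
  show "isD (mulm e f)"
  proof (rule isDI)
    fix c assume z: "zw c \<noteq> 0"
    show "mulm e f c = 0"
    proof (cases "mle e c")
      case True
      then have "zw (msub c e) \<noteq> 0" using z e zw_msub by simp
      moreover have "isD f" using f by simp
      ultimately have "f (msub c e) = 0" using isDD by blast
      then show ?thesis using True by (simp add: mulm_app)
    qed (simp add: mulm_app)
  qed
qed

lemma mulm_inj: "mulm e f = 0 \<Longrightarrow> f = 0"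
proof
  fix c assume "mulm e f = 0"
  then have "mulm e f (madd c e) = 0" by simp
  then show "f c = 0 c" by (simp add: mulm_madd)
qed

lemma rank_lemma0:
  fixes B :: "(mon \<Rightarrow> 'k::field) set"
  assumes fB: "finite B" and indB: "vs.independent B" and l: "lin f"
    and ker: "\<And>x. x \<in> vs.span B \<Longrightarrow> f x = 0 \<Longrightarrow> x = 0"
  shows "inj_on f B \<and> vs.independent (f ` B)"
  using rank_lemma[OF fB indB empty_subsetI l] ker by simp

context ctx begin

definition Kd :: "nat \<Rightarrow> (mon \<Rightarrow> 'k) set" where
  "Kd d = {f \<in> Pd d. \<forall>c. zw c \<noteq> 0 \<longrightarrow> contract f h c = 0}"

lemma Kd_subspace: "vs.subspace (Kd d)"
  unfolding vs.subspace_def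
proof (intro conjI ballI allI)
  show "0 \<in> Kd d" using vs.subspace_0[OF Pd_subspace] by (simp add: Kd_def)
  fix x y assume xy: "x \<in> Kd d" "y \<in> Kd d"
  then have "x \<in> Pd d" "y \<in> Pd d" by (simp_all add: Kd_def)
  then have "x + y \<in> Pd d" by (rule Pd_add)
  then show "x + y \<in> Kd d" using xy by (simp add: Kd_def contract_add)
next
  fix c x assume x: "x \<in> Kd d"
  then have "x \<in> Pd d" by (simp add: Kd_def)
  then have "sc c x \<in> Pd d" by (rule Pd_sc)
  then show "sc c x \<in> Kd d" using x by (simp add: Kd_def contract_sc)
qed

lemma Kd_Pd: "Kd d \<subseteq> Pd d" by (auto simp: Kd_def)

lemma mulm_Kd:
  assumes f: "f \<in> Kd d" and e: "zw e = 0"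
  shows "mulm e f \<in> Kd (d + mdeg e)"
proof -
  have "f \<in> Pd d" using f by (simp add: Kd_def)
  then have "mulm e f \<in> Pd (d + mdeg e)" by (rule mulm_Pd[OF _ e])
  moreover have "contract (mulm e f) h c = 0" if z: "zw c \<noteq> 0" for c
  proof -
    have "contract (mulm e f) h = contract (delta e) (contract f h)"
      unfolding mulm_def by (metis contract_assoc[OF hpoly] smult_ser_comm)
    then have "contract (mulm e f) h c = contract f h (madd c e)"
      by (simp add: contract_delta[OF dp_poly_contract[OF hpoly]])
    moreover have "zw (madd c e) \<noteq> 0" using z by simp
    ultimately show ?thesis using f by (simp add: Kd_def)
  qed
  ultimately show ?thesis by (simp add: Kd_def)
qed

lemma D5:
  assumes BK: "B \<subseteq> Kd d" and indB: "vs.independent B" and fB: "finite B" and ne: "B \<noteq> {}"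
  shows "\<exists>B'. B' \<subseteq> Kd (Suc d) \<and> vs.independent B' \<and> finite B' \<and> card B' = Suc (card B)"
proof -
  define ex :: mon where "ex = (1,0,0,0)"
  define ey :: mon where "ey = (0,1,0,0)"
  define E where "E = {a. a \<le> d \<and> (\<exists>v\<in>B. v (a, d - a, 0, 0) \<noteq> 0)}"
  have fE: "finite E" by (simp add: E_def)
  obtain v1 where v1: "v1 \<in> B" using ne by blast
  have "v1 \<noteq> 0" using indB v1 vs.dependent_zero by blast
  then obtain m where m: "v1 m \<noteq> 0" by (auto simp: fun_eq_iff)
  have "m \<in> Md d" using Pd_supp[of v1 d m] m v1 BK Kd_Pd by blast
  then obtain a where "m = (a, d - a, 0, 0)" "a \<le> d" by (auto simp: Md_eq)
  then have "a \<in> E" using v1 m by (auto simp: E_def)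
  then have neE: "E \<noteq> {}" by blast
  define am where "am = Max E"
  have amE: "am \<in> E" using fE neE by (simp add: am_def)
  have amax: "v (a', d - a', 0, 0) = 0" if "v \<in> B" "am < a'" "a' \<le> d" for v a'
  proof (rule ccontr)
    assume "v (a', d - a', 0, 0) \<noteq> 0"
    then have "a' \<in> E" using that by (auto simp: E_def)
    then show False using Max_ge[OF fE] that(2) am_def by fastforce
  qed
  obtain v0 where v0: "v0 \<in> B" "v0 (am, d - am, 0, 0) \<noteq> 0" "am \<le> d" using amE by (auto simp: E_def)
  define pt :: mon where "pt = (Suc am, d - am, 0, 0)"
  have yB_indep: "inj_on (mulm ey) B \<and> vs.independent (mulm ey ` B)"
  proof (rule rank_lemma0[OF fB indB lin_mulm])
    fix x assume "mulm ey x = 0" then show "x = 0" by (rule mulm_inj)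
  qed
  have L0: "w pt = 0" if w: "w \<in> vs.span (mulm ey ` B)" for w
  proof -
    obtain u where u: "w = (\<Sum>z\<in>mulm ey ` B. sc (u z) z)"
      using span_repr[of "mulm ey ` B" w] fB w by auto
    have z0: "z pt = 0" if z: "z \<in> mulm ey ` B" for z
    proof -
      obtain v where v: "v \<in> B" "z = mulm ey v" using z by blast
      show "z pt = 0"
      proof (cases "mle ey pt")
        case True
        then have "d - am \<ge> 1" by (simp add: ey_def pt_def)
        then have "msub pt ey = (Suc am, d - Suc am, 0, 0)" by (simp add: pt_def ey_def)
        moreover have "v (Suc am, d - Suc am, 0, 0) = 0" using amax[OF v(1), of "Suc am"] \<open>d - am \<ge> 1\<close> by simp
        ultimately show ?thesis using True v(2) by (simp add: mulm_app)
      next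
        case False
        then show ?thesis using v(2) by (simp add: mulm_app)
      qed
    qed
    have "w pt = (\<Sum>z\<in>mulm ey ` B. u z * z pt)" using u by (simp add: sum_fun_app)
    also have "\<dots> = 0" by (rule sum.neutral) (simp add: z0)
    finally show ?thesis .
  qed
  have xv0: "mulm ex v0 pt \<noteq> 0"
    using v0(2) by (simp add: mulm_app pt_def ex_def)
  have notin: "mulm ex v0 \<notin> vs.span (mulm ey ` B)" using L0 xv0 by blast
  define B' where "B' = insert (mulm ex v0) (mulm ey ` B)"
  have "vs.independent B'" unfolding B'_def by (rule vs.independent_insertI[OF notin]) (use yB_indep in blast)
  moreover have "finite B'" using fB by (simp add: B'_def)
  moreover have "card B' = Suc (card B)"
  proof -
    have "mulm ex v0 \<notin> mulm ey ` B"
    proof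
      assume "mulm ex v0 \<in> mulm ey ` B"
      then have "mulm ex v0 \<in> vs.span (mulm ey ` B)" by (rule vs.span_base)
      then show False using notin by contradiction
    qed
    then have "card B' = Suc (card (mulm ey ` B))" using fB by (simp add: B'_def)
    also have "card (mulm ey ` B) = card B" using yB_indep by (simp add: card_image)
    finally show ?thesis .
  qed
  moreover have "B' \<subseteq> Kd (Suc d)"
  proof -
    have "mulm ex v0 \<in> Kd (Suc d)" using mulm_Kd[of v0 d ex] v0(1) BK by (auto simp: ex_def)
    moreover have "mulm ey v \<in> Kd (Suc d)" if "v \<in> B" for v
      using mulm_Kd[of v d ey] that BK by (auto simp: ey_def)
    ultimately show ?thesis by (auto simp: B'_def)
  qed
  ultimately show ?thesis by blast
qed

end


lemma prd_add1: "prd d (f1 + f2) X = prd d f1 X + prd d f2 X"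
  unfolding prd_def by (simp add: sum.distrib algebra_simps)
lemma prd_sc1: "prd d (sc c f) X = c * prd d f X"
  unfolding prd_def by (simp add: sum_distrib_left algebra_simps)

lemma delta_Md_indep: "vs.independent (delta ` Md d :: (mon \<Rightarrow> 'k::field) set)"
proof (rule vs.independent_if_scalars_zero)
  show "finite (delta ` Md d :: (mon \<Rightarrow> 'k) set)" using finite_Md by simp
  fix f :: "(mon \<Rightarrow> 'k) \<Rightarrow> 'k" and x :: "mon \<Rightarrow> 'k" assume s: "(\<Sum>x\<in>delta ` Md d. sc (f x) x) = 0" and x: "x \<in> delta ` Md d"
  obtain m where m: "m \<in> Md d" "x = delta m" using x by blast
  have inj: "inj_on (delta :: mon \<Rightarrow> mon \<Rightarrow> 'k) (Md d)" using inj_delta by (rule inj_on_subset) simp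
  have "0 = (\<Sum>x\<in>delta ` Md d. sc (f x) x) m" using s by simp
  also have "\<dots> = (\<Sum>m'\<in>Md d. f (delta m') * delta m' m)" by (simp add: sum_fun_app sum.reindex[OF inj])
  also have "\<dots> = (\<Sum>m'\<in>Md d. if m' = m then f (delta m) else 0)"
    by (rule sum.cong) (auto simp: delta_app)
  also have "\<dots> = f (delta m)" using m(1) finite_Md[of d] by (simp add: sum.delta')
  finally show "f x = 0" using m by simp
qed

lemma Pd_basis_card:
  fixes B :: "(mon \<Rightarrow> 'k::field) set"
  assumes "B \<subseteq> Pd d" "vs.independent B" "Pd d \<subseteq> vs.span B"
  shows "finite B \<and> card B = Suc d"
proof -
  have fB: "finite B" "card B \<le> Suc d" using Pd_indep_bound[OF assms(2,1)] by auto
  have "delta ` Md d \<subseteq> vs.span B" using assms(3) delta_Pd by blast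
  then have "card (delta ` Md d :: (mon \<Rightarrow> 'k) set) \<le> card B"
    using vs.independent_span_bound[OF fB(1) delta_Md_indep] by blast
  moreover have "card (delta ` Md d :: (mon \<Rightarrow> 'k) set) = Suc d" by (rule card_delta_Md)
  ultimately have "Suc d \<le> card B" by simp
  then show ?thesis using fB by simp
qed

context ctx begin

lemma Kd7_bound:
  assumes U4r: "\<forall>f\<in>Kd 10. contract f g = 0 \<longrightarrow> f = 0"
    and BK: "B \<subseteq> Kd 7" and indB: "vs.independent B"
  shows "finite B \<and> card B \<le> 2"
proof -
  have fB: "finite B" using Pd_indep_bound[OF indB] BK Kd_Pd by blast
  moreover have "card B \<le> 2"
  proof (rule ccontr)
    assume "\<not> card B \<le> 2"
    then have "3 \<le> card B" by simp
    then obtain B3 where B3: "B3 \<subseteq> B" "card B3 = 3" by (rule obtain_subset_with_card_n)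
    have fB3: "finite B3" using B3 fB finite_subset by blast
    have i3: "vs.independent B3" using vs.independent_mono[OF indB B3(1)] .
    have B3K: "B3 \<subseteq> Kd 7" using B3(1) BK by blast
    have ne3: "B3 \<noteq> {}" using B3(2) by auto
    obtain B4 where B4: "B4 \<subseteq> Kd 8" "vs.independent B4" "finite B4" "card B4 = 4"
      using D5[OF B3K i3 fB3 ne3] B3(2) by (auto simp: numeral_eq_Suc)
    have ne4: "B4 \<noteq> {}" using B4(4) by auto
    obtain B5 where B5: "B5 \<subseteq> Kd 9" "vs.independent B5" "finite B5" "card B5 = 5"
      using D5[OF B4(1,2,3) ne4] B4(4) by (auto simp: numeral_eq_Suc)
    have ne5: "B5 \<noteq> {}" using B5(4) by auto
    obtain B6 where B6: "B6 \<subseteq> Kd 10" "vs.independent B6" "finite B6" "card B6 = 6"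
      using D5[OF B5(1,2,3) ne5] B5(4) by (auto simp: numeral_eq_Suc)
    have sp: "vs.span B6 \<subseteq> Kd 10" using vs.span_minimal[OF B6(1) Kd_subspace] .
    have r: "inj_on (\<lambda>x. contract x g) B6 \<and> vs.independent ((\<lambda>x. contract x g) ` B6)"
    proof (rule rank_lemma0[OF B6(3) B6(2) lin_contract])
      fix x assume "x \<in> vs.span B6" "contract x g = 0"
      then show "x = 0" using sp U4r by blast
    qed
    have "(\<lambda>x. contract x g) ` B6 \<subseteq> Pd 4"
    proof
      fix y assume "y \<in> (\<lambda>x. contract x g) ` B6"
      then obtain x where x: "x \<in> B6" "y = contract x g" by blast
      then have "x \<in> Pd 10" using B6(1) Kd_Pd by blast
      then show "y \<in> Pd 4" using contract_g_Pd[of x 10] x(2) by simp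
    qed
    then have "card ((\<lambda>x. contract x g) ` B6) \<le> Suc 4" using Pd_indep_bound r by blast
    moreover have "card ((\<lambda>x. contract x g) ` B6) = 6" using r B6(4) by (simp add: card_image)
    ultimately show False by simp
  qed
  ultimately show ?thesis by blast
qed

definition U6s :: "(mon \<Rightarrow> 'k) set" where
  "U6s = {f. hom 6 f \<and> contract f g = 0}"

definition WW :: "(mon \<Rightarrow> 'k) set" where
  "WW = (\<lambda>f. contract f h) ` U6s"

lemma U6s_subspace: "vs.subspace U6s"
  unfolding vs.subspace_def U6s_def
proof (intro conjI ballI allI)
  show "0 \<in> {f. hom 6 f \<and> contract f g = 0}" by (simp add: hom_def)
  fix x y assume xy: "x \<in> {f. hom 6 f \<and> contract f g = 0}" "y \<in> {f. hom 6 f \<and> contract f g = 0}"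
  have "hom 6 (x + y)"
  proof (rule homI)
    fix m assume "(x + y) m \<noteq> 0"
    then have "x m \<noteq> 0 \<or> y m \<noteq> 0" by auto
    then show "mdeg m = 6" using xy homD by blast
  qed
  then show "x + y \<in> {f. hom 6 f \<and> contract f g = 0}" using xy by (simp add: contract_add)
next
  fix c x assume x: "x \<in> {f. hom 6 f \<and> contract f g = 0}"
  have "hom 6 (sc c x)"
  proof (rule homI)
    fix m assume "sc c x m \<noteq> 0"
    then have "x m \<noteq> 0" by auto
    then show "mdeg m = 6" using x homD by blast
  qed
  then show "sc c x \<in> {f. hom 6 f \<and> contract f g = 0}" using x by (simp add: contract_sc sc_zero)
qed

lemma WW_Pd:
  assumes FA6: "\<And>f c. f \<in> U6s \<Longrightarrow> zw c \<noteq> 0 \<Longrightarrow> contract f h c = 0"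
  shows "WW \<subseteq> Pd 7"
proof
  fix w assume "w \<in> WW"
  then obtain f where f: "f \<in> U6s" "w = contract f h" by (auto simp: WW_def)
  have "hom 7 w" using contract_hom[OF hhom, of 6 f] f by (simp add: U6s_def)
  moreover have "isD w" using FA6[OF f(1)] f(2) by (auto intro: isDI)
  ultimately show "w \<in> Pd 7" by (simp add: Pd_def)
qed

lemma perp_K:
  assumes s: "s \<in> Pd 7" and perp: "\<And>w. w \<in> WW \<Longrightarrow> prd 7 s w = 0"
  shows "s \<in> Kd 7"
proof -
  have "contract s h c = 0" if z: "zw c \<noteq> 0" for c
  proof (cases "mdeg c = 6")
    case True
    have dU: "delta c \<in> U6s" using delta_hom[of c] True delta_g[OF z] by (simp add: U6s_def)
    then have "contract (delta c) h \<in> WW" by (simp add: WW_def)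
    then have "0 = prd 7 s (contract (delta c) h)" using perp by simp
    also have "\<dots> = contract s (contract (delta c) h) (0,0,0,0)"
      by (rule prd_contract[OF s dp_poly_contract[OF hpoly]])
    also have "\<dots> = contract (delta c) (contract s h) (0,0,0,0)"
      by (simp only: contract_swap[OF hpoly])
    also have "\<dots> = contract s h c" by (simp add: contract_delta[OF dp_poly_contract[OF hpoly]])
    finally show ?thesis by simp
  next
    case False
    have "hom 6 (contract s h)" using contract_hom[OF hhom, of 7 s] s by (simp add: Pd_def)
    then show ?thesis using False homD by blast
  qed
  then show ?thesis using s by (simp add: Kd_def)
qed

end


lemma card_Diff_ge:
  assumes "finite B" "C \<subseteq> B" "card B = 8" "card C \<le> 2"
  shows "6 \<le> card (B - C)"
  using assms card_Diff_subset[of C B] finite_subset[of C B] by simp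

context ctx begin

lemma WW6:
  assumes U4r: "\<forall>f\<in>Kd 10. contract f g = 0 \<longrightarrow> f = 0"
    and FA6: "\<And>f c. f \<in> U6s \<Longrightarrow> zw c \<noteq> 0 \<Longrightarrow> contract f h c = 0"
  shows "\<exists>BW \<subseteq> WW. vs.independent BW \<and> finite BW \<and> 6 \<le> card BW"
proof -
  obtain BW where BW: "BW \<subseteq> WW" "vs.independent BW" "WW \<subseteq> vs.span BW"
    by (rule vs.maximal_independent_subset)
  have WP: "WW \<subseteq> Pd 7" by (rule WW_Pd[OF FA6])
  have fBW: "finite BW" using Pd_indep_bound[OF BW(2)] BW(1) WP by blast
  have "6 \<le> card BW"
  proof (rule ccontr)
    assume "\<not> 6 \<le> card BW"
    then have c5: "card BW \<le> 5" by simp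
    obtain \<iota> :: "(mon \<Rightarrow> 'k) \<Rightarrow> nat" and n where \<iota>: "\<iota> ` BW = {i. i < n}" "inj_on \<iota> BW"
      using finite_imp_inj_to_nat_seg[OF fBW] by blast
    define e :: "(mon \<Rightarrow> 'k) \<Rightarrow> (mon \<Rightarrow> 'k)" where "e w = delta (\<iota> w, 0, 0, 0)" for w
    define L where "L s = (\<Sum>w\<in>BW. sc (prd 7 s w) (e w))" for s
    have Lapp: "L s m = (\<Sum>w\<in>BW. prd 7 s w * e w m)" for s m by (simp add: L_def sum_sc_app)
    have linL: "lin L"
      unfolding lin_def
    proof (intro conjI allI)
      fix x y show "L (x + y) = L x + L y"
        by (simp add: fun_eq_iff Lapp prd_add1 sum.distrib algebra_simps)
    next
      fix c x show "L (sc c x) = sc c (L x)"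
        by (simp add: fun_eq_iff Lapp prd_sc1 sum_distrib_left algebra_simps)
    qed
    have Lz: "prd 7 s w = 0" if Ls: "L s = 0" and w: "w \<in> BW" for s w
    proof -
      have "0 = L s (\<iota> w, 0, 0, 0)" using Ls by simp
      also have "\<dots> = (\<Sum>w'\<in>BW. if w' = w then prd 7 s w' else 0)"
        unfolding Lapp
      proof (rule sum.cong[OF refl])
        fix w' assume w': "w' \<in> BW"
        have "(\<iota> w', 0::nat, 0::nat, 0::nat) = (\<iota> w, 0, 0, 0) \<longleftrightarrow> w' = w"
          using inj_onD[OF \<iota>(2) _ w' w] by auto
        moreover have "\<iota> w = \<iota> w' \<longleftrightarrow> w' = w" using inj_onD[OF \<iota>(2) _ w' w] by auto
        ultimately show "prd 7 s w' * e w' (\<iota> w, 0, 0, 0) = (if w' = w then prd 7 s w' else 0)"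
          by (simp add: e_def delta_app)
      qed
      also have "\<dots> = prd 7 s w" using w fBW by (simp add: sum.delta')
      finally show ?thesis by simp
    qed
    have LzW: "prd 7 s w = 0" if Ls: "L s = 0" and w: "w \<in> WW" for s w
    proof -
      obtain u where u: "w = (\<Sum>z\<in>BW. sc (u z) z)" using span_repr[OF fBW] w BW(3) by blast
      have "prd 7 s w = (\<Sum>z\<in>BW. u z * prd 7 s z)" using u by (simp add: prd_lin)
      also have "\<dots> = 0" using Lz[OF Ls] by simp
      finally show ?thesis .
    qed
    define Kk where "Kk = {s \<in> Pd 7. L s = 0}"
    have KkK: "Kk \<subseteq> Kd 7" using perp_K LzW by (auto simp: Kk_def)
    obtain C where C: "C \<subseteq> Kk" "vs.independent C" "Kk \<subseteq> vs.span C"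
      by (rule vs.maximal_independent_subset)
    have c2: "finite C \<and> card C \<le> 2" by (rule Kd7_bound[OF U4r _ C(2)]) (use C(1) KkK in blast)
    have CP: "C \<subseteq> Pd 7" using C(1) by (auto simp: Kk_def)
    obtain B where B: "C \<subseteq> B" "B \<subseteq> Pd 7" "vs.independent B" "Pd 7 \<subseteq> vs.span B"
      by (rule vs.maximal_independent_subset_extend[OF CP C(2)])
    have fB: "finite B" "card B = 8" using Pd_basis_card[OF B(2,3,4)] by auto
    have spB: "vs.span B \<subseteq> Pd 7" by (rule vs.span_minimal[OF B(2) Pd_subspace])
    have rl: "inj_on L (B - C) \<and> vs.independent (L ` (B - C))"
    proof (rule rank_lemma[OF fB(1) B(3) B(1) linL])
      fix x assume "x \<in> vs.span B" "L x = 0"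
      then have "x \<in> Kk" using spB by (auto simp: Kk_def)
      then show "x \<in> vs.span C" using C(3) by blast
    qed
    have "6 \<le> card (B - C)" by (rule card_Diff_ge[OF fB(1) B(1) fB(2)]) (use c2 in simp)
    then have c6: "6 \<le> card (L ` (B - C))" using rl by (simp add: card_image)
    have "L ` (B - C) \<subseteq> vs.span (e ` BW)"
    proof
      fix y assume "y \<in> L ` (B - C)"
      then obtain s where "y = L s" by blast
      moreover have "L s \<in> vs.span (e ` BW)" unfolding L_def
        by (intro vs.span_sum vs.span_scale vs.span_base) auto
      ultimately show "y \<in> vs.span (e ` BW)" by simp
    qed
    then have "card (L ` (B - C)) \<le> card (e ` BW)"
      using vs.independent_span_bound[of "e ` BW"] fBW rl by blast
    also have "\<dots> \<le> card BW" using fBW by (rule card_image_le)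
    finally show False using c5 c6 by simp
  qed
  then show ?thesis using BW fBW by blast
qed

end


lemma fam_of_indep:
  fixes v :: "'a \<Rightarrow> (mon \<Rightarrow> 'k::field)"
  assumes fX: "finite X" and inj: "inj_on v X" and ind: "vs.independent (v ` X)"
    and s: "(\<Sum>x\<in>X. sc (c x) (v x)) = 0" and x: "x \<in> X"
  shows "c x = 0"
proof -
  define u where "u z = c (the_inv_into X v z)" for z
  have "(\<Sum>z\<in>v ` X. sc (u z) z) = (\<Sum>x\<in>X. sc (u (v x)) (v x))" by (simp add: sum.reindex[OF inj])
  also have "\<dots> = (\<Sum>x\<in>X. sc (c x) (v x))"
    by (rule sum.cong) (simp_all add: u_def the_inv_into_f_f[OF inj])
  finally have "(\<Sum>z\<in>v ` X. sc (u z) z) = 0" using s by simp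
  then have "u (v x) = 0" using vs.independentD[OF ind _ subset_refl] fX x by blast
  then show ?thesis by (simp add: u_def the_inv_into_f_f[OF inj x])
qed

context ctx begin

definition VV :: "(mon \<Rightarrow> 'k) set" where
  "VV = {r \<in> Pd 7. \<exists>f\<in>U6s. contract f h + contract r g = 0}"

definition Mmap :: "(mon \<Rightarrow> 'k) \<Rightarrow> (mon \<Rightarrow> 'k)" where
  "Mmap f = (\<lambda>c. if zw c = 0 then 0 else contract f h c)"

lemma lin_Mmap: "lin Mmap"
  unfolding lin_def Mmap_def by (auto simp: fun_eq_iff contract_add contract_sc)

lemma VV_subspace: "vs.subspace VV"
  unfolding vs.subspace_def
proof (intro conjI ballI allI)
  have p0: "(0::mon\<Rightarrow>'k) \<in> Pd 7" by (rule vs.subspace_0[OF Pd_subspace])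
  have u0: "(0::mon\<Rightarrow>'k) \<in> U6s" by (rule vs.subspace_0[OF U6s_subspace])
  have "contract (0::mon\<Rightarrow>'k) h + contract 0 g = 0" by simp
  then show "0 \<in> VV" unfolding VV_def using p0 u0 by blast
  fix x y assume x: "x \<in> VV" and y: "y \<in> VV"
  then obtain fx fy where f: "fx \<in> U6s" "contract fx h + contract x g = 0" "fy \<in> U6s" "contract fy h + contract y g = 0"
    "x \<in> Pd 7" "y \<in> Pd 7" by (auto simp: VV_def)
  have "fx + fy \<in> U6s" using vs.subspace_add[OF U6s_subspace f(1,3)] .
  moreover have "contract (fx + fy) h + contract (x + y) g = 0"
    using f(2,4) by (simp add: contract_add algebra_simps)
  moreover have "x + y \<in> Pd 7" using Pd_add[OF f(5,6)] .
  ultimately show "x + y \<in> VV" by (auto simp: VV_def)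
next
  fix c x assume x: "x \<in> VV"
  then obtain fx where f: "fx \<in> U6s" "contract fx h + contract x g = 0" "x \<in> Pd 7" by (auto simp: VV_def)
  have "sc c fx \<in> U6s" using vs.subspace_scale[OF U6s_subspace f(1)] .
  moreover have "contract (sc c fx) h + contract (sc c x) g = 0"
  proof -
    have "contract (sc c fx) h + contract (sc c x) g = sc c (contract fx h + contract x g)"
      by (simp add: contract_sc fun_eq_iff algebra_simps)
    then show ?thesis using f(2) by (simp add: sc_zero)
  qed
  moreover have "sc c x \<in> Pd 7" using Pd_sc[OF f(3)] .
  ultimately show "sc c x \<in> VV" by (auto simp: VV_def)
qed

lemma VV_Pd: "VV \<subseteq> Pd 7" by (auto simp: VV_def)

lemma R4_exists:
  assumes U4r: "\<forall>f\<in>Kd 10. contract f g = 0 \<longrightarrow> f = 0"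
    and FA6: "\<And>f c. f \<in> U6s \<Longrightarrow> zw c \<noteq> 0 \<Longrightarrow> contract f h c = 0"
    and surj7: "\<forall>w\<in>Pd 7. \<exists>r\<in>Pd 7. contract r g = w"
  shows "\<exists>R4 \<subseteq> VV. finite R4 \<and> card R4 = 4 \<and> inj_on Mmap R4 \<and> vs.independent (Mmap ` R4)"
proof -
  obtain BW where BW: "BW \<subseteq> WW" "vs.independent BW" "finite BW" "6 \<le> card BW"
    using WW6[OF U4r FA6] by blast
  have WP: "WW \<subseteq> Pd 7" by (rule WW_Pd[OF FA6])
  have "\<forall>w\<in>BW. \<exists>r. r \<in> Pd 7 \<and> contract r g = - w"
  proof
    fix w assume "w \<in> BW"
    then have "w \<in> Pd 7" using BW(1) WP by blast
    then have "sc (-1) w \<in> Pd 7" by (rule Pd_sc)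
    moreover have "sc (-1) w = - w" by (simp add: fun_eq_iff)
    ultimately show "\<exists>r. r \<in> Pd 7 \<and> contract r g = - w" using surj7 by auto
  qed
  then obtain rr where rr: "\<forall>w\<in>BW. rr w \<in> Pd 7 \<and> contract (rr w) g = - w"
    by (rule bchoice[THEN exE]) blast
  have rrV: "rr w \<in> VV" if w: "w \<in> BW" for w
  proof -
    obtain f where f: "f \<in> U6s" "w = contract f h" using w BW(1) by (auto simp: WW_def)
    then have "contract f h + contract (rr w) g = 0" using rr w by simp
    then show ?thesis using f rr w by (auto simp: VV_def)
  qed
  have rrind: "\<forall>w\<in>BW. cc w = 0" if s: "(\<Sum>w\<in>BW. sc (cc w) (rr w)) = 0" for cc
  proof -
    have "contract (\<Sum>w\<in>BW. sc (cc w) (rr w)) g = 0" using s by simp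
    then have "(\<Sum>w\<in>BW. sc (cc w) (contract (rr w) g)) = 0" by (simp add: contract_lincomb)
    then have "(\<Sum>w\<in>BW. sc (cc w) (- w)) = 0" using rr by (metis (no_types, lifting) sum.cong)
    then have "- (\<Sum>w\<in>BW. sc (cc w) w) = 0" by (simp add: sum_negf[symmetric] sc_def fun_eq_iff sum_fun_app)
    then have "(\<Sum>w\<in>BW. sc (cc w) w) = 0" by simp
    then show ?thesis using vs.independentD[OF BW(2) BW(3) subset_refl] by blast
  qed
  have rr_card: "card (rr ` BW) = card BW" by (rule fam_card[OF BW(3) rrind])
  have rr_ind: "vs.independent (rr ` BW)" by (rule fam_indep[OF BW(3) rrind])
  define KV where "KV = VV \<inter> Kd 7"
  obtain C where C: "C \<subseteq> KV" "vs.independent C" "KV \<subseteq> vs.span C"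
    by (rule vs.maximal_independent_subset)
  have c2: "finite C \<and> card C \<le> 2" by (rule Kd7_bound[OF U4r _ C(2)]) (use C(1) in \<open>auto simp: KV_def\<close>)
  have CV: "C \<subseteq> VV" using C(1) by (auto simp: KV_def)
  obtain B where B: "C \<subseteq> B" "B \<subseteq> VV" "vs.independent B" "VV \<subseteq> vs.span B"
    by (rule vs.maximal_independent_subset_extend[OF CV C(2)])
  have fB: "finite B" using Pd_indep_bound[OF B(3)] B(2) VV_Pd by blast
  have "rr ` BW \<subseteq> vs.span B" using rrV B(4) by blast
  then have "card (rr ` BW) \<le> card B" using vs.independent_span_bound[OF fB(1) rr_ind] by blast
  then have c6: "6 \<le> card B" using rr_card BW(4) by simp
  have spB: "vs.span B \<subseteq> VV" by (rule vs.span_minimal[OF B(2) VV_subspace])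
  have rl: "inj_on Mmap (B - C) \<and> vs.independent (Mmap ` (B - C))"
  proof (rule rank_lemma[OF fB B(3) B(1) lin_Mmap])
    fix x assume x: "x \<in> vs.span B" "Mmap x = 0"
    then have xV: "x \<in> VV" using spB by blast
    have "contract x h c = 0" if "zw c \<noteq> 0" for c
      using fun_cong[OF x(2), of c] that by (simp add: Mmap_def)
    then have "x \<in> Kd 7" using xV VV_Pd by (auto simp: Kd_def)
    then have "x \<in> KV" using xV by (simp add: KV_def)
    then show "x \<in> vs.span C" using C(3) by blast
  qed
  have cC: "card C \<le> 2" "finite C" using c2 by auto
  have "card (B - C) = card B - card C" using card_Diff_subset[OF cC(2) B(1)] .
  then have "4 \<le> card (B - C)" using c6 cC(1) by linarith
  then obtain R4 where R4: "R4 \<subseteq> B - C" "card R4 = 4" by (rule obtain_subset_with_card_n)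
  have "finite R4" using R4 fB finite_subset by blast
  moreover have "inj_on Mmap R4" using rl R4(1) inj_on_subset by blast
  moreover have "vs.independent (Mmap ` R4)" using rl R4(1) vs.independent_mono image_mono by metis
  moreover have "R4 \<subseteq> VV" using R4(1) B(2) by blast
  ultimately show ?thesis using R4(2) by blast
qed

end


context ctx begin

lemma main_ctx:
  assumes H07: "HB GG 0 7 = 8" and H13: "HB GG 1 3 = 6" and H04: "HB GG 0 4 = 5"
    and H16: "HB GG 1 6 = 0" and H17: "HB GG 1 7 = 0"
  shows "4 \<le> HB GG 2 6"
proof -
  have FA6: "contract f h c = 0" if "f \<in> U6s" "zw c \<noteq> 0" for f c
    using FA[OF H16 _ _ _ that(2)] that(1) by (simp add: U6s_def)
  have FA7: "contract m h c = 0" if "hom 7 m" "contract m g = 0" "zw c \<noteq> 0" for m c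
    using FA[OF H17 _ that] by simp
  have hs: "zw b \<le> 1" if "h b \<noteq> 0" for b using hstruct[OF H16 that] .
  have inj7: "\<forall>r\<in>Pd 7. contract r g = 0 \<longrightarrow> r = 0" and surj7: "\<forall>w\<in>Pd 7. \<exists>r\<in>Pd 7. contract r g = w"
    using phi_facts[OF H07] by blast+
  have U4r: "\<forall>f\<in>Kd 10. contract f g = 0 \<longrightarrow> f = 0"
  proof (intro ballI impI)
    fix f assume f: "f \<in> Kd 10" "contract f g = 0"
    show "f = 0"
    proof (rule U4[OF H13 H04 inj7 hs])
      show "f \<in> Pd 10" using f(1) by (simp add: Kd_def)
      show "contract f h c = 0" if "zw c \<noteq> 0" for c using f(1) that by (simp add: Kd_def)
      show "contract f g = 0" by (rule f(2))
    qed
  qed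
  obtain R4 where R4: "R4 \<subseteq> VV" "finite R4" "card R4 = 4" "inj_on Mmap R4" "vs.independent (Mmap ` R4)"
    using R4_exists[OF U4r FA6 surj7] by blast
  have "\<forall>r\<in>R4. \<exists>f. f \<in> U6s \<and> contract f h + contract r g = 0"
    using R4(1) by (auto simp: VV_def)
  then obtain ff where ff: "\<forall>r\<in>R4. ff r \<in> U6s \<and> contract (ff r) h + contract r g = 0"
    by (rule bchoice[THEN exE]) blast
  have rP: "r \<in> Pd 7" if "r \<in> R4" for r using that R4(1) VV_Pd by blast
  have ffh: "hom 6 (ff r)" "contract (ff r) g = 0" if "r \<in> R4" for r using ff that by (auto simp: U6s_def)
  define Fm where "Fm r = ff r + r" for r
  have trF: "trunc 7 (Fm r) = r" if r: "r \<in> R4" for r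
  proof
    fix m
    show "trunc 7 (Fm r) m = r m"
    proof (cases "mdeg m = 7")
      case True
      then have "ff r m = 0" using homD[OF ffh(1)[OF r], of m] by auto
      then show ?thesis using True by (simp add: trunc_def Fm_def)
    next
      case False
      then have "r m = 0" using rP[OF r] homD by (fastforce simp: Pd_def)
      then show ?thesis using False by (simp add: trunc_def)
    qed
  qed
  have injF: "inj_on Fm R4"
  proof (rule inj_onI)
    fix r r' assume "r \<in> R4" "r' \<in> R4" "Fm r = Fm r'"
    then show "r = r'" using trF by metis
  qed
  define Y where "Y = Fm ` R4"
  have cardY: "card Y = 4" using R4(3) injF by (simp add: Y_def card_image)
  have fY: "finite Y" using R4(2) by (simp add: Y_def)
  have cFG: "contract (Fm r) GG = contract r h" if r: "r \<in> R4" for r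
  proof -
    have "contract (Fm r) GG = contract (ff r) g + contract (ff r) h + (contract r g + contract r h)"
      by (simp add: Fm_def cG contract_add)
    also have "\<dots> = contract r h" using ff r ffh(2)[OF r] by (simp add: algebra_simps)
    finally show ?thesis .
  qed
  have rh6: "hom 6 (contract r h)" if "r \<in> R4" for r
    using contract_hom[OF hhom, of 7 r] rP[OF that] by (simp add: Pd_def)
  have YC: "Y \<subseteq> C_pre GG 2 6"
  proof
    fix y assume "y \<in> Y"
    then obtain r where r: "r \<in> R4" "y = Fm r" by (auto simp: Y_def)
    have "Fm r + 0 + 0 \<in> C_pre GG 2 6"
    proof (rule C_pre_intro[OF Gpoly])
      have "ff r \<in> mpow 6" by (rule hom_mpow[OF ffh(1)[OF r(1)]])
      moreover have "r \<in> mpow 6" using hom_mpow_le[of 7 r 6] rP[OF r(1)] by (simp add: Pd_def)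
      ultimately show "Fm r \<in> mpow 6" unfolding Fm_def by (rule mpow_add)
      show "lowdeg (kk GG 2 6) (contract (Fm r) GG)"
      proof (rule lowdegI)
        fix c assume "kk GG 2 6 \<le> mdeg c"
        then have "mdeg c \<noteq> 6" by (simp add: degG)
        then show "contract (Fm r) GG c = 0" using cFG[OF r(1)] homD[OF rh6[OF r(1)]] by fastforce
      qed
    qed simp_all
    then show "y \<in> C_pre GG 2 6" using r by simp
  qed
  have indY: "indep_mod Y (C_pre GG (Suc 2) 6)"
    unfolding indep_mod_def
  proof (intro allI impI ballI)
    fix cc :: "(mon \<Rightarrow> 'k) \<Rightarrow> 'k" and y
    assume mem: "(\<lambda>m. \<Sum>x\<in>Y. cc x * x m) \<in> C_pre GG (Suc 2) 6" and y: "y \<in> Y"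
    define c' where "c' r = cc (Fm r)" for r
    define F where "F = (\<Sum>r\<in>R4. sc (c' r) (Fm r))"
    have "(\<lambda>m. \<Sum>x\<in>Y. cc x * x m) = F"
      by (simp add: F_def Y_def fun_eq_iff sum.reindex[OF injF] c'_def sum_fun_app)
    then have FC: "F \<in> C_pre GG (Suc 2) 6" using mem by simp
    define rs where "rs = (\<Sum>r\<in>R4. sc (c' r) r)"
    have rsP: "rs \<in> Pd 7" unfolding rs_def by (intro Pd_sum Pd_sc rP)
    have rsh6: "hom 6 (contract rs h)" using contract_hom[OF hhom, of 7 rs] rsP by (simp add: Pd_def)
    have cFGs: "contract F GG = contract rs h"
    proof -
      have "contract F GG = (\<Sum>r\<in>R4. sc (c' r) (contract (Fm r) GG))" by (simp add: F_def contract_lincomb)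
      also have "\<dots> = (\<Sum>r\<in>R4. sc (c' r) (contract r h))" using cFG by simp
      also have "\<dots> = contract rs h" by (simp add: rs_def contract_lincomb)
      finally show ?thesis .
    qed
    obtain a m n where e: "F = a + m + n" and a: "a \<in> mpow 6" "lowdeg (kk GG (Suc 2) 6) (contract a GG)"
      and m: "m \<in> mpow (Suc 6)" and n: "contract n GG = 0"
      using C_pre_elim[OF Gpoly FC] by blast
    have alow: "contract a GG c = 0" if "6 \<le> mdeg c" for c
      using lowdegD[OF a(2)] that by (simp add: degG)
    have ca: "contract a GG = contract rs h - contract m GG"
    proof -
      have "a = F - m - n" using e by simp
      then have "contract a GG = contract F GG - contract m GG - contract n GG" by (simp add: contract_diff)
      then show ?thesis using n cFGs by simp
    qed
    have t6: "trunc 6 m = 0" by (rule trunc_mpow[OF m])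
    have m7g: "contract (trunc 7 m) g = 0"
    proof
      fix c
      show "contract (trunc 7 m) g c = 0 c"
      proof (cases "mdeg c = 7")
        case True
        have "contract m GG c = contract (trunc 7 m) g c" using True t6 by (simp add: cGG_trunc)
        moreover have "contract m GG c = 0"
        proof -
          have "contract rs h c = 0" using homD[OF rsh6, of c] True by auto
          moreover have "contract a GG c = 0" using alow True by simp
          ultimately show ?thesis using fun_cong[OF ca, of c] by simp
        qed
        ultimately show ?thesis by simp
      next
        case False
        have "hom 7 (contract (trunc 7 m) g)" using contract_hom[OF ghom hom_trunc[of 7 m]] by simp
        then show ?thesis using False homD by fastforce
      qed
    qed
    have Mrs: "Mmap rs = 0"
    proof
      fix c
      show "Mmap rs c = 0 c"
      proof (cases "zw c = 0")
        case True then show ?thesis by (simp add: Mmap_def)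
      next
        case False
        have "contract rs h c = 0"
        proof (cases "mdeg c = 6")
          case True
          have "contract m GG c = contract (trunc 8 m) g c + contract (trunc 7 m) h c"
            using True by (simp add: cGG_trunc)
          moreover have "contract (trunc 8 m) g c = 0" using isDD[OF isD_contract_g False] .
          moreover have "contract (trunc 7 m) h c = 0" by (rule FA7[OF hom_trunc m7g False])
          moreover have "contract a GG c = 0" using alow True by simp
          ultimately show ?thesis using fun_cong[OF ca, of c] by simp
        next
          case False
          then show ?thesis using homD[OF rsh6, of c] by auto
        qed
        then show ?thesis using False by (simp add: Mmap_def)
      qed
    qed
    have "(\<Sum>r\<in>R4. sc (c' r) (Mmap r)) = 0"
      using Mrs by (simp add: rs_def lin_sum[OF lin_Mmap] lin_sc[OF lin_Mmap])
    then have "\<forall>r\<in>R4. c' r = 0" using fam_of_indep[OF R4(2) R4(4) R4(5)] by blast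
    then show "cc y = 0" using y by (auto simp: Y_def c'_def)
  qed
  have "card Y \<le> qdim (C_pre GG 2 6) (C_pre GG (Suc 2) 6)"
    by (rule qdim_ge[OF C_pre_sub fY YC indY])
  then show ?thesis using cardY by (simp add: HB_def)
qed

end


lemma contract_mpow_hom:
  assumes "hom d G" "a \<in> mpow (Suc d)"
  shows "contract a G = 0"
proof
  fix c
  have "contract a G c = 0"
  proof (rule contract_zero_if)
    fix b assume b: "G b \<noteq> 0" "mle c b"
    have "mdeg b = d" using homD[OF assms(1) b(1)] .
    then have "mdeg (msub b c) < Suc d" using mdeg_msub[OF b(2)] by simp
    then show "a (msub b c) = 0" using mpowD[OF assms(2)] by blast
  qed
  then show "contract a G c = 0 c" by simp
qed

lemma HB_deg13:
  fixes G :: "mon \<Rightarrow> 'k::field"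
  assumes hG: "hom 13 G" and pG: "dp_poly G"
  shows "HB G 0 14 = 0"
proof -
  obtain X where X: "finite X" "X \<subseteq> C_pre G 0 14" "indep_mod X (C_pre G (Suc 0) 14)" "card X = HB G 0 14"
    using qdim_attained[OF mpow_sub_C_pre[OF pG, of 14 "Suc 0"], of "C_pre G 0 14"] by (auto simp: HB_def)
  have "X = {}"
  proof (rule ccontr)
    assume "X \<noteq> {}"
    then obtain x where x: "x \<in> X" by blast
    then obtain a m n where e: "x = a + m + n" and a: "a \<in> mpow 14" and m: "m \<in> mpow (Suc 14)"
      and n: "contract n G = 0"
      using C_pre_elim[OF pG] X(2) by blast
    have "contract a G = 0" by (rule contract_mpow_hom[OF hG]) (use a in simp)
    moreover have "contract m G = 0"
    proof (rule contract_mpow_hom[OF hG], rule mpowI)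
      fix b :: mon assume "mdeg b < Suc 13"
      then show "m b = 0" using mpowD[OF m, of b] by simp
    qed
    ultimately have cx: "contract x G = 0" using e n by (simp add: contract_add)
    have "0 + 0 + x \<in> C_pre G (Suc 0) 14"
      by (rule C_pre_intro[OF pG]) (simp_all add: cx lowdeg_def)
    then have xC: "x \<in> C_pre G (Suc 0) 14" by simp
    let ?c = "\<lambda>z. if z = x then 1 else (0::'k)"
    have "(\<lambda>mm. \<Sum>z\<in>X. ?c z * z mm) = x"
    proof
      fix mm
      have "(\<Sum>z\<in>X. ?c z * z mm) = (\<Sum>z\<in>X. if z = x then x mm else 0)" by (rule sum.cong) auto
      also have "\<dots> = x mm" using X(1) x by (simp add: sum.delta')
      finally show "(\<Sum>z\<in>X. ?c z * z mm) = x mm" .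
    qed
    then have "?c x = 0" using indep_modD[OF X(3) _ x, of ?c] xC by simp
    then show False by simp
  qed
  then show ?thesis using X(4) by simp
qed

theorem theorem1p49:
  fixes g g13 :: "mon \<Rightarrow> 'k::field"
  assumes "in_D g" and "dp_homog 14 g"
    and "dp_homog 13 g13"
    and "\<forall>i. HB (\<lambda>b. g b + g13 b) 0 i =
           (let L = [1,2,3,4,5,6,7,8,7,6,5,4,3,2,1] in if i < length L then L ! i else 0)"
    and "\<forall>i. HB (\<lambda>b. g b + g13 b) 1 i =
           (let L = [0,2,4,6,4,2,0,0,2,4,6,4,2,0] in if i < length L then L ! i else 0)"
  shows "HB (\<lambda>b. g b + g13 b) 2 6 \<ge> 4"
proof -
  have H014: "HB (\<lambda>b. g b + g13 b) 0 14 = 1" using assms(4) by (drule_tac x=14 in spec) simp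
  have hom13: "hom 13 g13" and p13: "dp_poly g13" using assms(3) by (auto simp: dp_homog_def hom_def)
  show ?thesis
  proof (cases "g = 0")
    case True
    then have "(\<lambda>b. g b + g13 b) = g13" by (simp add: fun_eq_iff)
    then have "HB (\<lambda>b. g b + g13 b) 0 14 = 0" using HB_deg13[OF hom13 p13] by simp
    then show ?thesis using H014 by simp
  next
    case False
    have gD: "isD g"
    proof (rule isDI)
      fix m :: mon assume z: "zw m \<noteq> 0"
      obtain a b c d where m: "m = (a,b,c,d)" by (cases m rule: prod_cases4)
      have "g (a,b,c,d) \<noteq> 0 \<longrightarrow> c = 0 \<and> d = 0" using assms(1) unfolding in_D_def by blast
      then show "g m = 0" using z m by auto
    qed
    have g14: "hom 14 g" and pg: "dp_poly g" using assms(2) by (auto simp: dp_homog_def hom_def)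
    interpret ctx g g13 by unfold_locales (use gD g14 pg hom13 p13 False in auto)
    have H07: "HB GG 0 7 = 8" using assms(4) by (drule_tac x=7 in spec) simp
    have H04: "HB GG 0 4 = 5" using assms(4) by (drule_tac x=4 in spec) simp
    have H13: "HB GG 1 3 = 6" using assms(5) by (drule_tac x=3 in spec) simp
    have H16: "HB GG 1 6 = 0" using assms(5) by (drule_tac x=6 in spec) simp
    have H17: "HB GG 1 7 = 0" using assms(5) by (drule_tac x=7 in spec) simp
    show ?thesis using main_ctx[OF H07 H13 H04 H16 H17] by simp
  qed
qed


end
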